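(* Consider the MTGC algorithm described in the context. Suppose (A1) and (A2) hold. Then for every global round $t$, $$\sum_{e=0}^{E-1}\frac1N\sum_{j=1}^N\Theta_j^{t,e}\le8\gamma^2H^2L^2Q_t+8\gamma^2H^2L^2D_t+8\gamma^2H^2\sum_{e=0}^{E-1}\frac1N\sum_{j=1}^NY_j^{t,e}+8\gamma^2H^2\sum_{e=0}^{E-1}\mathbb E\|\nabla f(\hat{\boldsymbol x}^{t,e})\|^2+2\gamma^2EH\frac1N\sum_{j=1}^N\frac1{n_j}\sigma^2.$$
   Context: Setting: $N$ groups; group $j$ has a set $\mathcal C_j$ of $n_j\ge1$ clients, sets pairwise disjoint. Client $i$ has distribution $\mathcal D_i$, stochastic loss $F_i(\boldsymbol x,\xi)$, $F_i(\boldsymbol x)=\mathbb E_{\xi\sim\mathcal D_i}F_i(\boldsymbol x,\xi)$; $f_j=\frac1{n_j}\sum_{i\in\mathcal C_j}F_i$, $f=\frac1N\sum_jf_j$. For client $i$, $j$ denotes its group. (A1): $\|\nabla F_i(\boldsymbol x)-\nabla F_i(\boldsymbol y)\|\le L\|\boldsymbol x-\boldsymbol y\|$ for all $\boldsymbol x,\boldsymbol y,i$. (A2): $\mathbb E_{\xi\sim\mathcal D_i}\nabla F_i(\boldsymbol x,\xi)=\nabla F_i(\boldsymbol x)$ and $\mathbb E_{\xi\sim\mathcal D_i}\|\nabla F_i(\boldsymbol x,\xi)-\nabla F_i(\boldsymbol x)\|^2\le\sigma^2$ for all $\boldsymbol x,i$. MTGC: initial $\bar{\boldsymbol x}^0$,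 integers $E,H\ge1$, $\gamma>0$; samples $\xi_{i,h}^{t,e}\sim\mathcal D_i$ fresh and independent of the past. $\boldsymbol y_j^0=-\frac1{n_j}\sum_{i\in\mathcal C_j}\nabla F_i(\bar{\boldsymbol x}^0,\xi_{i,0}^{0,0})+\frac1N\sum_{j'}\frac1{n_{j'}}\sum_{i\in\mathcal C_{j'}}\nabla F_i(\bar{\boldsymbol x}^0,\xi_{i,0}^{0,0})$. For each $t\ge0$: $\bar{\boldsymbol x}_j^{t,0}=\bar{\boldsymbol x}^t$; $\boldsymbol z_i^{t,0}=-\nabla F_i(\bar{\boldsymbol x}^t,\xi_{i,0}^{t,0})+\frac1{n_j}\sum_{i'\in\mathcal C_j}\nabla F_{i'}(\bar{\boldsymbol x}^t,\xi_{i',0}^{t,0})$; for $e=0,\dots,E-1$: $\boldsymbol x_{i,0}^{t,e}=\bar{\boldsymbol x}_j^{t,e}$, $\boldsymbol x_{i,h+1}^{t,e}=\boldsymbol x_{i,h}^{t,e}-\gamma(\nabla F_i(\boldsymbol x_{i,h}^{t,e},\xi_{i,h}^{t,e})+\boldsymbol z_i^{t,e}+\boldsymbol y_j^t)$ for $h=0,\dots,H-1$, $\bar{\boldsymbol x}_j^{t,e+1}=\frac1{n_j}\sum_{i\in\mathcal C_j}\boldsymbol x_{i,H}^{t,e}$, $\boldsymbol z_i^{t,e+1}=\boldsymbol z_i^{t,e}+\frac1{H\gamma}(\boldsymbol x_{i,H}^{t,e}-\bar{\boldsymbol x}_j^{t,e+1})$; then $\bar{\boldsymbol x}^{t+1}=\frac1N\sum_j\bar{\boldsymbol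 x}_j^{t,E}$, $\boldsymbol y_j^{t+1}=\boldsymbol y_j^t+\frac1{HE\gamma}(\bar{\boldsymbol x}_j^{t,E}-\bar{\boldsymbol x}^{t+1})$. $\mathbb E$ is over all randomness. Notation: $\hat{\boldsymbol x}^{t,e}=\frac1N\sum_j\bar{\boldsymbol x}_j^{t,e}$; $\Theta_j^{t,e}=\mathbb E\|\bar{\boldsymbol x}_j^{t,e+1}-\bar{\boldsymbol x}_j^{t,e}\|^2$; $Y_j^{t,e}=\mathbb E\|\boldsymbol y_j^t+\nabla f_j(\hat{\boldsymbol x}^{t,e})-\nabla f(\hat{\boldsymbol x}^{t,e})\|^2$; $D_t=\sum_{e=0}^{E-1}\frac1N\sum_j\mathbb E\|\hat{\boldsymbol x}^{t,e}-\bar{\boldsymbol x}_j^{t,e}\|^2$; $Q_t=\sum_{e=0}^{E-1}\frac1{NH}\sum_j\frac1{n_j}\sum_{i\in\mathcal C_j}\sum_{h=0}^{H-1}\mathbb E\|\bar{\boldsymbol x}_j^{t,e}-\boldsymbol x_{i,h}^{t,e}\|^2$. *)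

theory Defs
  imports "HOL-Probability.Probability"
begin

text \<open>MTGC iterates as deterministic functions of a sample path
  xi i t e h (client i, global round t, group round e, local step h).
  g i x s is the stochastic gradient of client i at x for sample s.\<close>

fun mtgc_local :: "(nat \<Rightarrow> 'a \<Rightarrow> 's \<Rightarrow> 'a::real_vector) \<Rightarrow> real \<Rightarrow> nat \<Rightarrow> (nat \<Rightarrow> 's)
    \<Rightarrow> 'a \<Rightarrow> 'a \<Rightarrow> nat \<Rightarrow> 'a" where
  "mtgc_local g \<gamma> i s x0 c 0 = x0"
| "mtgc_local g \<gamma> i s x0 c (Suc h) =
     (let xh = mtgc_local g \<gamma> i s x0 c h in xh - \<gamma> *\<^sub>R (g i xh (s h) + c))"

text \<open>Group-level loop of group j in global round t, started at xb with group correction y;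
  returns (xbar_j^{t,e}, z^{t,e}).\<close>
fun mtgc_inner :: "(nat \<Rightarrow> 'a \<Rightarrow> 's \<Rightarrow> 'a::real_vector) \<Rightarrow> (nat \<Rightarrow> nat set) \<Rightarrow> nat \<Rightarrow> real
    \<Rightarrow> (nat \<Rightarrow> nat \<Rightarrow> nat \<Rightarrow> nat \<Rightarrow> 's) \<Rightarrow> nat \<Rightarrow> nat \<Rightarrow> 'a \<Rightarrow> 'a \<Rightarrow> nat \<Rightarrow> 'a \<times> (nat \<Rightarrow> 'a)" where
  "mtgc_inner g C H \<gamma> xi j t xb y 0 =
     (xb, \<lambda>i. - g i xb (xi i t 0 0)
              + (1 / real (card (C j))) *\<^sub>R (\<Sum>i'\<in>C j. g i' xb (xi i' t 0 0)))"
| "mtgc_inner g C H \<gamma> xi j t xb y (Suc e) =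
     (let (xbe, z) = mtgc_inner g C H \<gamma> xi j t xb y e;
          xH = (\<lambda>i. mtgc_local g \<gamma> i (xi i t e) xbe (z i + y) H);
          xbe' = (1 / real (card (C j))) *\<^sub>R (\<Sum>i\<in>C j. xH i)
      in (xbe', \<lambda>i. z i + (1 / (real H * \<gamma>)) *\<^sub>R (xH i - xbe')))"

fun mtgc_outer :: "(nat \<Rightarrow> 'a \<Rightarrow> 's \<Rightarrow> 'a::real_vector) \<Rightarrow> (nat \<Rightarrow> nat set) \<Rightarrow> nat \<Rightarrow> nat \<Rightarrow> nat
    \<Rightarrow> real \<Rightarrow> 'a \<Rightarrow> (nat \<Rightarrow> nat \<Rightarrow> nat \<Rightarrow> nat \<Rightarrow> 's) \<Rightarrow> nat \<Rightarrow> 'a \<times> (nat \<Rightarrow> 'a)" where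
  "mtgc_outer g C N E H \<gamma> x0 xi 0 =
     (x0, \<lambda>j. - (1 / real (card (C j))) *\<^sub>R (\<Sum>i\<in>C j. g i x0 (xi i 0 0 0))
             + (1 / real N) *\<^sub>R (\<Sum>j'<N. (1 / real (card (C j'))) *\<^sub>R (\<Sum>i\<in>C j'. g i x0 (xi i 0 0 0))))"
| "mtgc_outer g C N E H \<gamma> x0 xi (Suc t) =
     (let (xb, y) = mtgc_outer g C N E H \<gamma> x0 xi t;
          xE = (\<lambda>j. fst (mtgc_inner g C H \<gamma> xi j t xb (y j) E));
          xb' = (1 / real N) *\<^sub>R (\<Sum>j<N. xE j)
      in (xb', \<lambda>j. y j + (1 / (real H * real E * \<gamma>)) *\<^sub>R (xE j - xb')))"

definition mtgc_xbar where
  "mtgc_xbar g C N E H \<gamma> x0 xi t = fst (mtgc_outer g C N E H \<gamma> x0 xi t)"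

definition mtgc_y where
  "mtgc_y g C N E H \<gamma> x0 xi t j = snd (mtgc_outer g C N E H \<gamma> x0 xi t) j"

definition mtgc_xbarj where
  "mtgc_xbarj g C N E H \<gamma> x0 xi j t e =
     fst (mtgc_inner g C H \<gamma> xi j t (mtgc_xbar g C N E H \<gamma> x0 xi t) (mtgc_y g C N E H \<gamma> x0 xi t j) e)"

definition mtgc_z where
  "mtgc_z g C N E H \<gamma> x0 xi j t e i =
     snd (mtgc_inner g C H \<gamma> xi j t (mtgc_xbar g C N E H \<gamma> x0 xi t) (mtgc_y g C N E H \<gamma> x0 xi t j) e) i"

definition mtgc_x where
  "mtgc_x g C N E H \<gamma> x0 xi j t e i h =
     mtgc_local g \<gamma> i (xi i t e) (mtgc_xbarj g C N E H \<gamma> x0 xi j t e)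
       (mtgc_z g C N E H \<gamma> x0 xi j t e i + mtgc_y g C N E H \<gamma> x0 xi t j) h"

text \<open>Gradients of f_j and f, written via the client gradients GF i = nabla F_i.\<close>
definition grad_fj :: "(nat \<Rightarrow> 'a \<Rightarrow> 'a::real_vector) \<Rightarrow> (nat \<Rightarrow> nat set) \<Rightarrow> nat \<Rightarrow> 'a \<Rightarrow> 'a" where
  "grad_fj GF C j x = (1 / real (card (C j))) *\<^sub>R (\<Sum>i\<in>C j. GF i x)"

definition grad_f :: "(nat \<Rightarrow> 'a \<Rightarrow> 'a::real_vector) \<Rightarrow> (nat \<Rightarrow> nat set) \<Rightarrow> nat \<Rightarrow> 'a \<Rightarrow> 'a" where
  "grad_f GF C N x = (1 / real N) *\<^sub>R (\<Sum>j<N. grad_fj GF C j x)"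

definition mtgc_xhat where
  "mtgc_xhat g C N E H \<gamma> x0 xi t e = (1 / real N) *\<^sub>R (\<Sum>j<N. mtgc_xbarj g C N E H \<gamma> x0 xi j t e)"

definition sample_path :: "(nat \<Rightarrow> nat \<Rightarrow> nat \<Rightarrow> nat \<Rightarrow> 'm \<Rightarrow> 's) \<Rightarrow> 'm \<Rightarrow> nat \<Rightarrow> nat \<Rightarrow> nat \<Rightarrow> nat \<Rightarrow> 's" where
  "sample_path xi w = (\<lambda>i t e h. xi i t e h w)"

end

theory Submission
  imports Defs
begin


locale mtgc_setup = prob_space M
  for M :: "'m measure" +
  fixes D :: "nat \<Rightarrow> 's measure"
    and gF :: "nat \<Rightarrow> 'a::euclidean_space \<Rightarrow> 's \<Rightarrow> 'a"
    and GF :: "nat \<Rightarrow> 'a \<Rightarrow> 'a"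
    and C :: "nat \<Rightarrow> nat set"
    and N E H :: nat
    and \<gamma> L \<sigma> :: real
    and \<xi> :: "nat \<Rightarrow> nat \<Rightarrow> nat \<Rightarrow> nat \<Rightarrow> 'm \<Rightarrow> 's"
  assumes N: "N \<ge> 1" and E: "E \<ge> 1" and H: "H \<ge> 1" and gamma: "\<gamma> > 0"
    and C_fin: "\<And>j. j < N \<Longrightarrow> finite (C j)"
    and C_ne: "\<And>j. j < N \<Longrightarrow> C j \<noteq> {}"
    and D_prob: "\<And>j i. j < N \<Longrightarrow> i \<in> C j \<Longrightarrow> prob_space (D i)"
    and gF_meas: "\<And>j i. j < N \<Longrightarrow> i \<in> C j \<Longrightarrow>
        (\<lambda>p. gF i (fst p) (snd p)) \<in> borel_measurable (borel \<Otimes>\<^sub>M D i)"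
    and A1: "\<And>j i x y. j < N \<Longrightarrow> i \<in> C j \<Longrightarrow> norm (GF i x - GF i y) \<le> L * norm (x - y)"
    and A2_int: "\<And>j i x. j < N \<Longrightarrow> i \<in> C j \<Longrightarrow> integrable (D i) (gF i x)"
    and A2_unbiased: "\<And>j i x. j < N \<Longrightarrow> i \<in> C j \<Longrightarrow> (\<integral>s. gF i x s \<partial>D i) = GF i x"
    and A2_var_int: "\<And>j i x. j < N \<Longrightarrow> i \<in> C j \<Longrightarrow>
        integrable (D i) (\<lambda>s. (norm (gF i x s - GF i x))\<^sup>2)"
    and A2_var: "\<And>j i x. j < N \<Longrightarrow> i \<in> C j \<Longrightarrow>
        (\<integral>s. (norm (gF i x s - GF i x))\<^sup>2 \<partial>D i) \<le> \<sigma>\<^sup>2"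
    and samples_distr: "\<And>j i t' e h. j < N \<Longrightarrow> i \<in> C j \<Longrightarrow> e < E \<Longrightarrow> h < H \<Longrightarrow>
        distr M (D i) (\<xi> i t' e h) = D i"
    and samples_indep: "indep_vars (\<lambda>(i, t', e, h). D i) (\<lambda>(i, t', e, h). \<xi> i t' e h)
        {(i, t', e, h). (\<exists>j<N. i \<in> C j) \<and> e < E \<and> h < H}"
begin

abbreviation "Xv \<equiv> (\<lambda>(i, t', e, h). \<xi> i t' e h)"
abbreviation "Dv \<equiv> (\<lambda>(i::nat, t'::nat, e::nat, h::nat). D i)"
abbreviation "II \<equiv> {(i, t', e, h). (\<exists>j<N. i \<in> C j) \<and> e < E \<and> h < H}"

definition "Ev k = {Xv k -` A \<inter> space M | A. A \<in> sets (Dv k)}"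
definition "NK K = sigma (space M) (\<Union>k\<in>K. Ev k)"

lemma rv: "k \<in> II \<Longrightarrow> Xv k \<in> M \<rightarrow>\<^sub>M Dv k"
  using samples_indep unfolding indep_vars_def2 by blast

lemma rv': "j < N \<Longrightarrow> i \<in> C j \<Longrightarrow> e < E \<Longrightarrow> h < H \<Longrightarrow> \<xi> i t e h \<in> M \<rightarrow>\<^sub>M D i"
  using rv[of "(i,t,e,h)"] by auto

lemma Ev_Pow: "(\<Union>k\<in>K. Ev k) \<subseteq> Pow (space M)"
  unfolding Ev_def by auto

lemma sets_NK: "sets (NK K) = sigma_sets (space M) (\<Union>k\<in>K. Ev k)"
  unfolding NK_def by (rule sets_measure_of[OF Ev_Pow])

lemma space_NK[simp]: "space (NK K) = space M"
  unfolding NK_def by (rule space_measure_of[OF Ev_Pow])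

lemma NK_sub_M: assumes "K \<subseteq> II" shows "sets (NK K) \<subseteq> sets M"
proof -
  have "(\<Union>k\<in>K. Ev k) \<subseteq> sets M"
    using assms rv unfolding Ev_def by (force intro: measurable_sets)
  then show ?thesis unfolding sets_NK by (rule sets.sigma_sets_subset)
qed

lemma NK_mono: "K \<subseteq> K' \<Longrightarrow> sets (NK K) \<subseteq> sets (NK K')"
  unfolding sets_NK by (intro sigma_sets_mono') auto

lemma meas_NK_mono: "f \<in> NK K \<rightarrow>\<^sub>M S \<Longrightarrow> K \<subseteq> K' \<Longrightarrow> f \<in> NK K' \<rightarrow>\<^sub>M S"
  using measurable_mono[of S S "NK K" "NK K'"] NK_mono by auto

lemma meas_NK_M: "f \<in> NK K \<rightarrow>\<^sub>M S \<Longrightarrow> K \<subseteq> II \<Longrightarrow> f \<in> M \<rightarrow>\<^sub>M S"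
  using measurable_mono[of S S "NK K" M] NK_sub_M by auto

lemma Xv_NK: assumes "k \<in> K" "K \<subseteq> II" shows "Xv k \<in> NK K \<rightarrow>\<^sub>M Dv k"
proof -
  have r: "Xv k \<in> M \<rightarrow>\<^sub>M Dv k" using rv assms by blast
  show ?thesis
  proof (rule measurableI)
    fix x assume "x \<in> space (NK K)"
    then show "Xv k x \<in> space (Dv k)" using measurable_space[OF r] by simp
  next
    fix A assume "A \<in> sets (Dv k)"
    then have "Xv k -` A \<inter> space M \<in> Ev k" unfolding Ev_def by blast
    then have "Xv k -` A \<inter> space M \<in> (\<Union>k\<in>K. Ev k)" using assms(1) by blast
    then show "Xv k -` A \<inter> space (NK K) \<in> sets (NK K)"
      unfolding sets_NK space_NK by (rule sigma_sets.Basic)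
  qed
qed

lemma xi_NK: "(i,t,e,h) \<in> K \<Longrightarrow> K \<subseteq> II \<Longrightarrow> \<xi> i t e h \<in> NK K \<rightarrow>\<^sub>M D i"
  using Xv_NK[of "(i,t,e,h)" K] by simp

lemma Ev_Int_stable: "Int_stable (Ev k)"
proof (rule Int_stableI)
  fix a b assume "a \<in> Ev k" "b \<in> Ev k"
  then obtain A B where "A \<in> sets (Dv k)" "B \<in> sets (Dv k)" "a = Xv k -` A \<inter> space M" "b = Xv k -` B \<inter> space M"
    unfolding Ev_def by blast
  then show "a \<inter> b \<in> Ev k" unfolding Ev_def
    by (intro CollectI exI[of _ "A \<inter> B"]) auto
qed

lemma indep_NK:
  assumes K: "K \<subseteq> II" and k: "k \<in> II" "k \<notin> K" and U: "U \<in> NK K \<rightarrow>\<^sub>M S"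
    and A: "A \<in> sets S" and B: "B \<in> sets (Dv k)"
  shows "prob ((U -` A \<inter> space M) \<inter> (Xv k -` B \<inter> space M)) = prob (U -` A \<inter> space M) * prob (Xv k -` B \<inter> space M)"
proof -
  have ind: "indep_sets Ev II"
    using samples_indep unfolding indep_vars_def2 Ev_def by auto
  have "(\<Union>b. case_bool K {k} b) = K \<union> {k}" by (auto simp: UNIV_bool)
  then have ind2: "indep_sets Ev (\<Union>b\<in>UNIV. case_bool K {k} b)"
    using indep_sets_mono_index[OF _ ind] K k by auto
  have "indep_sets (\<lambda>b. sigma_sets (space M) (\<Union>i\<in>case_bool K {k} b. Ev i)) UNIV"
    by (rule indep_sets_collect_sigma[OF ind2 Ev_Int_stable])
       (use k in \<open>auto simp: disjoint_family_on_def split: bool.split\<close>)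
  then have ind3: "indep_set (sigma_sets (space M) (\<Union>i\<in>K. Ev i)) (sigma_sets (space M) (Ev k))"
    unfolding indep_set_def
    by (rule indep_sets_mono_sets) (auto split: bool.split)
  have UM: "U \<in> M \<rightarrow>\<^sub>M S" using meas_NK_M[OF U K] .
  have s1: "sigma_sets (space M) {U -` A \<inter> space M | A. A \<in> sets S} \<subseteq> sigma_sets (space M) (\<Union>i\<in>K. Ev i)"
  proof (rule sigma_sets_mono)
    show "{U -` A \<inter> space M | A. A \<in> sets S} \<subseteq> sigma_sets (space M) (\<Union>i\<in>K. Ev i)"
    proof safe
      fix A assume "A \<in> sets S"
      from measurable_sets[OF U this] show "U -` A \<inter> space M \<in> sigma_sets (space M) (\<Union>i\<in>K. Ev i)"
        by (simp add: sets_NK)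
    qed
  qed
  have s2: "sigma_sets (space M) {Xv k -` A \<inter> space M | A. A \<in> sets (Dv k)} = sigma_sets (space M) (Ev k)"
    unfolding Ev_def ..
  have ind4: "indep_set (sigma_sets (space M) {U -` A \<inter> space M | A. A \<in> sets S})
      (sigma_sets (space M) {Xv k -` A \<inter> space M | A. A \<in> sets (Dv k)})"
    using ind3 unfolding indep_set_def s2
    by (rule indep_sets_mono_sets) (use s1 in \<open>simp split: bool.split\<close>)
  have a: "U -` A \<inter> space M \<in> sigma_sets (space M) {U -` A \<inter> space M | A. A \<in> sets S}"
    using A by (intro sigma_sets.Basic) blast
  have b: "Xv k -` B \<inter> space M \<in> sigma_sets (space M) {Xv k -` A \<inter> space M | A. A \<in> sets (Dv k)}"
    using B by (intro sigma_sets.Basic) blast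
  show ?thesis
    using ind4 a b unfolding indep_sets2_eq by blast
qed

end

context mtgc_setup begin

lemma indep_fubini:
  assumes K: "K \<subseteq> II" and k: "(i,t,e,h) \<in> II" "(i,t,e,h) \<notin> K" and U: "U \<in> NK K \<rightarrow>\<^sub>M S"
    and phi: "phi \<in> borel_measurable (S \<Otimes>\<^sub>M D i)"
  shows "(\<integral>\<^sup>+\<omega>. phi (U \<omega>, \<xi> i t e h \<omega>) \<partial>M) = (\<integral>\<^sup>+\<omega>. (\<integral>\<^sup>+s. phi (U \<omega>, s) \<partial>D i) \<partial>M)"
proof -
  obtain j where j: "j < N" "i \<in> C j" using k by auto
  have dx: "distr M (D i) (\<xi> i t e h) = D i" using samples_distr[OF j] k by auto
  have UM: "U \<in> M \<rightarrow>\<^sub>M S" using meas_NK_M[OF U K] .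
  have XM: "\<xi> i t e h \<in> M \<rightarrow>\<^sub>M D i" using rv k(1) by force
  have XY: "(\<lambda>x. (U x, \<xi> i t e h x)) \<in> M \<rightarrow>\<^sub>M (S \<Otimes>\<^sub>M D i)"
    using UM XM by (rule measurable_Pair)
  interpret Di: prob_space "D i" using D_prob[OF j] .
  interpret Su: prob_space "distr M S U" by (rule prob_space_distr[OF UM])
  have eq: "distr M S U \<Otimes>\<^sub>M D i = distr M (S \<Otimes>\<^sub>M D i) (\<lambda>x. (U x, \<xi> i t e h x))"
  proof (rule pair_measure_eqI)
    show "sigma_finite_measure (distr M S U)" ..
    show "sigma_finite_measure (D i)" ..
    show "sets (distr M S U \<Otimes>\<^sub>M D i) = sets (distr M (S \<Otimes>\<^sub>M D i) (\<lambda>x. (U x, \<xi> i t e h x)))"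
      by (simp cong: sets_pair_measure_cong)
    fix A B assume A: "A \<in> sets (distr M S U)" and B: "B \<in> sets (D i)"
    have A': "A \<in> sets S" using A by simp
    have "emeasure (distr M (S \<Otimes>\<^sub>M D i) (\<lambda>x. (U x, \<xi> i t e h x))) (A \<times> B)
        = emeasure M ((\<lambda>x. (U x, \<xi> i t e h x)) -` (A \<times> B) \<inter> space M)"
      using A' B by (intro emeasure_distr[OF XY]) auto
    also have "(\<lambda>x. (U x, \<xi> i t e h x)) -` (A \<times> B) \<inter> space M = (U -` A \<inter> space M) \<inter> (\<xi> i t e h -` B \<inter> space M)"
      by auto
    also have "emeasure M \<dots> = emeasure M (U -` A \<inter> space M) * emeasure M (\<xi> i t e h -` B \<inter> space M)"
      using indep_NK[OF K k U A', of B] B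
      by (simp add: emeasure_eq_measure measure_nonneg ennreal_mult)
    also have "\<dots> = emeasure (distr M S U) A * emeasure (D i) B"
    proof -
      have "emeasure (D i) B = emeasure M (\<xi> i t e h -` B \<inter> space M)"
        using emeasure_distr[OF XM B] unfolding dx .
      moreover have "emeasure (distr M S U) A = emeasure M (U -` A \<inter> space M)"
        using emeasure_distr[OF UM A'] .
      ultimately show ?thesis by simp
    qed
    finally show "emeasure (distr M S U) A * emeasure (D i) B = emeasure (distr M (S \<Otimes>\<^sub>M D i) (\<lambda>x. (U x, \<xi> i t e h x))) (A \<times> B)"
      by simp
  qed
  have phi': "phi \<in> borel_measurable (distr M S U \<Otimes>\<^sub>M D i)"
    using phi by (simp cong: measurable_cong_sets sets_pair_measure_cong)
  have "(\<integral>\<^sup>+\<omega>. phi (U \<omega>, \<xi> i t e h \<omega>) \<partial>M) = integral\<^sup>N (distr M (S \<Otimes>\<^sub>M D i) (\<lambda>x. (U x, \<xi> i t e h x))) phi"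
    by (rule nn_integral_distr[symmetric]) (use XY phi in auto)
  also have "\<dots> = integral\<^sup>N (distr M S U \<Otimes>\<^sub>M D i) phi" unfolding eq ..
  also have "\<dots> = (\<integral>\<^sup>+ x. \<integral>\<^sup>+ y. phi (x, y) \<partial>D i \<partial>distr M S U)"
    by (rule Di.nn_integral_fst[symmetric, OF phi'])
  also have "\<dots> = (\<integral>\<^sup>+\<omega>. (\<integral>\<^sup>+s. phi (U \<omega>, s) \<partial>D i) \<partial>M)"
    by (rule nn_integral_distr[OF UM]) (use Di.borel_measurable_nn_integral_fst[OF phi'] in simp)
  finally show ?thesis .
qed

end

context mtgc_setup begin

lemma GF_cont: assumes "j < N" "i \<in> C j" shows "continuous_on UNIV (GF i)"
proof -
  have "\<bar>L\<bar>-lipschitz_on UNIV (GF i)"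
  proof (rule lipschitz_onI)
    fix x y :: 'a
    have "norm (GF i x - GF i y) \<le> L * norm (x - y)" using A1[OF assms] .
    also have "\<dots> \<le> \<bar>L\<bar> * norm (x - y)" by (intro mult_right_mono) auto
    finally show "dist (GF i x) (GF i y) \<le> \<bar>L\<bar> * dist x y" by (simp add: dist_norm)
  qed auto
  then show ?thesis by (rule lipschitz_on_continuous_on)
qed

lemma GF_meas[measurable]: assumes "j < N" "i \<in> C j" shows "GF i \<in> borel_measurable borel"
  by (rule borel_measurable_continuous_onI[OF GF_cont[OF assms]])

lemma sq_add_le: "(norm (x + y))\<^sup>2 \<le> 2 * (norm x)\<^sup>2 + 2 * (norm (y::'b::real_normed_vector))\<^sup>2"
proof -
  have "norm (x + y) \<le> norm x + norm y" by (rule norm_triangle_ineq)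
  then have "(norm (x + y))\<^sup>2 \<le> (norm x + norm y)\<^sup>2" by (intro power_mono) auto
  also have "\<dots> \<le> 2 * (norm x)\<^sup>2 + 2 * (norm y)\<^sup>2"
    using power2_sum[of "norm x" "norm y"] power2_diff[of "norm x" "norm y"] zero_le_power2[of "norm x - norm y"]
    by linarith
  finally show ?thesis .
qed

lemma norm_add_sq: "(norm (a + b))\<^sup>2 = (norm a)\<^sup>2 + 2 * (a \<bullet> b) + (norm (b::'b::real_inner))\<^sup>2"
  by (simp add: power2_norm_eq_inner inner_add_left inner_add_right inner_commute)

lemma noise_D_bound:
  assumes j: "j < N" "i \<in> C j"
  shows "(\<integral>\<^sup>+s. ennreal ((norm (a + (gF i x s - GF i x)))\<^sup>2) \<partial>D i) \<le> ennreal ((norm a)\<^sup>2 + \<sigma>\<^sup>2)"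
proof -
  interpret Di: prob_space "D i" using D_prob[OF j] .
  define eps where "eps s = gF i x s - GF i x" for s
  have ei: "integrable (D i) eps" unfolding eps_def using A2_int[OF j] by auto
  have e0: "(\<integral>s. eps s \<partial>D i) = 0" unfolding eps_def
    using A2_int[OF j] A2_unbiased[OF j] by (simp add: Bochner_Integration.integral_diff Di.prob_space)
  have vi: "integrable (D i) (\<lambda>s. (norm (eps s))\<^sup>2)" unfolding eps_def using A2_var_int[OF j] .
  have vb: "(\<integral>s. (norm (eps s))\<^sup>2 \<partial>D i) \<le> \<sigma>\<^sup>2" unfolding eps_def using A2_var[OF j] .
  have pw: "\<And>s. (norm (a + eps s))\<^sup>2 = (norm a)\<^sup>2 + 2 * (a \<bullet> eps s) + (norm (eps s))\<^sup>2"
    by (rule norm_add_sq)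
  have ii: "integrable (D i) (\<lambda>s. 2 * (a \<bullet> eps s))"
    using ei by (intro integrable_mult_right integrable_inner_right)
  have int: "integrable (D i) (\<lambda>s. (norm (a + eps s))\<^sup>2)"
    unfolding pw using ii vi by (intro Bochner_Integration.integrable_add) auto
  have "(\<integral>\<^sup>+s. ennreal ((norm (a + eps s))\<^sup>2) \<partial>D i) = ennreal (\<integral>s. (norm (a + eps s))\<^sup>2 \<partial>D i)"
    by (rule nn_integral_eq_integral[OF int]) auto
  also have "(\<integral>s. (norm (a + eps s))\<^sup>2 \<partial>D i) = (norm a)\<^sup>2 + 2 * (a \<bullet> (\<integral>s. eps s \<partial>D i)) + (\<integral>s. (norm (eps s))\<^sup>2 \<partial>D i)"
    unfolding pw using ii vi ei
    by (simp add: Bochner_Integration.integral_add Di.prob_space)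
  also have "\<dots> \<le> (norm a)\<^sup>2 + \<sigma>\<^sup>2" using e0 vb by simp
  finally show ?thesis unfolding eps_def by (simp add: ennreal_leI)
qed

definition "G K (f::'m \<Rightarrow> 'a) \<longleftrightarrow> K \<subseteq> II \<and> f \<in> borel_measurable (NK K) \<and> integrable M (\<lambda>\<omega>. (norm (f \<omega>))\<^sup>2)"

lemma G_M: "G K f \<Longrightarrow> f \<in> borel_measurable M"
  unfolding G_def using meas_NK_M by blast

lemma G_int: "G K f \<Longrightarrow> integrable M (\<lambda>\<omega>. (norm (f \<omega>))\<^sup>2)"
  unfolding G_def by blast

lemma G_const: "K \<subseteq> II \<Longrightarrow> G K (\<lambda>_. c)"
  unfolding G_def by auto

lemma G_mono: "G K f \<Longrightarrow> K \<subseteq> K' \<Longrightarrow> K' \<subseteq> II \<Longrightarrow> G K' f"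
  unfolding G_def using meas_NK_mono by blast

lemma G_add: assumes "G K f" "G K g" shows "G K (\<lambda>\<omega>. f \<omega> + g \<omega>)"
proof -
  have m[measurable]: "f \<in> borel_measurable (NK K)" "g \<in> borel_measurable (NK K)" using assms unfolding G_def by auto
  have m2: "(\<lambda>\<omega>. f \<omega> + g \<omega>) \<in> borel_measurable (NK K)" by (rule borel_measurable_add[OF m])
  have mM[measurable]: "f \<in> borel_measurable M" "g \<in> borel_measurable M" using assms G_M by auto
  have "integrable M (\<lambda>\<omega>. (norm (f \<omega> + g \<omega>))\<^sup>2)"
  proof (rule Bochner_Integration.integrable_bound)
    show "integrable M (\<lambda>\<omega>. 2 * (norm (f \<omega>))\<^sup>2 + 2 * (norm (g \<omega>))\<^sup>2)"
      using assms G_int by (intro Bochner_Integration.integrable_add integrable_mult_right) auto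
    show "(\<lambda>\<omega>. (norm (f \<omega> + g \<omega>))\<^sup>2) \<in> borel_measurable M" by measurable
    show "AE x in M. norm ((norm (f x + g x))\<^sup>2) \<le> norm (2 * (norm (f x))\<^sup>2 + 2 * (norm (g x))\<^sup>2)"
      using sq_add_le by auto
  qed
  then show ?thesis using assms m2 unfolding G_def by auto
qed

lemma G_scale: assumes "G K f" shows "G K (\<lambda>\<omega>. c *\<^sub>R f \<omega>)"
proof -
  have "integrable M (\<lambda>\<omega>. c\<^sup>2 * (norm (f \<omega>))\<^sup>2)"
    using G_int[OF assms] by (intro integrable_mult_right)
  then have "integrable M (\<lambda>\<omega>. (norm (c *\<^sub>R f \<omega>))\<^sup>2)"
    by (simp add: power_mult_distrib)
  then show ?thesis using assms unfolding G_def by auto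
qed

lemma G_uminus: "G K f \<Longrightarrow> G K (\<lambda>\<omega>. - f \<omega>)"
  using G_scale[of K f "-1"] by simp

lemma G_diff: "G K f \<Longrightarrow> G K g \<Longrightarrow> G K (\<lambda>\<omega>. f \<omega> - g \<omega>)"
  using G_add[of K f "\<lambda>\<omega>. - g \<omega>"] G_uminus[of K g] by simp

lemma G_sum: assumes "finite S" "K \<subseteq> II" "\<And>i. i \<in> S \<Longrightarrow> G K (f i)" shows "G K (\<lambda>\<omega>. \<Sum>i\<in>S. f i \<omega>)"
  using assms
proof (induction S rule: finite_induct)
  case empty then show ?case using G_const[of K 0] by simp
next
  case (insert x F) then show ?case using G_add[of K "f x" "\<lambda>\<omega>. \<Sum>i\<in>F. f i \<omega>"] by simp
qed

lemma G_GF: assumes j: "j < N" "i \<in> C j" and X: "G K X" shows "G K (\<lambda>\<omega>. GF i (X \<omega>))"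
proof -
  have m: "X \<in> borel_measurable (NK K)" using X unfolding G_def by auto
  have m2: "(\<lambda>\<omega>. GF i (X \<omega>)) \<in> borel_measurable (NK K)"
    using measurable_compose[OF m GF_meas[OF j]] by (simp add: comp_def)
  have mM[measurable]: "X \<in> borel_measurable M" using G_M[OF X] .
  note GF_meas[OF j, measurable]
  have "integrable M (\<lambda>\<omega>. (norm (GF i (X \<omega>)))\<^sup>2)"
  proof (rule Bochner_Integration.integrable_bound)
    show "integrable M (\<lambda>\<omega>. 2 * (norm (GF i 0))\<^sup>2 + 2 * L\<^sup>2 * (norm (X \<omega>))\<^sup>2)"
      using G_int[OF X] by (intro Bochner_Integration.integrable_add integrable_mult_right) auto
    show "(\<lambda>\<omega>. (norm (GF i (X \<omega>)))\<^sup>2) \<in> borel_measurable M" by measurable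
    show "AE x in M. norm ((norm (GF i (X x)))\<^sup>2) \<le> norm (2 * (norm (GF i 0))\<^sup>2 + 2 * L\<^sup>2 * (norm (X x))\<^sup>2)"
    proof (rule AE_I2)
      fix x
      have a: "norm (GF i (X x) - GF i 0) \<le> L * norm (X x)" using A1[OF j, of "X x" 0] by simp
      have b: "norm (GF i (X x)) \<le> norm (GF i 0) + L * norm (X x)"
        using a norm_triangle_ineq2[of "GF i (X x)" "GF i 0"] by linarith
      have "(norm (GF i (X x)))\<^sup>2 \<le> (norm (GF i 0) + L * norm (X x))\<^sup>2"
        using b by (intro power_mono) auto
      also have "\<dots> \<le> 2 * (norm (GF i 0))\<^sup>2 + 2 * L\<^sup>2 * (norm (X x))\<^sup>2"
        using power2_sum[of "norm (GF i 0)" "L * norm (X x)"] power2_diff[of "norm (GF i 0)" "L * norm (X x)"]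
          zero_le_power2[of "norm (GF i 0) - L * norm (X x)"] by (simp add: power_mult_distrib)
      finally show "norm ((norm (GF i (X x)))\<^sup>2) \<le> norm (2 * (norm (GF i 0))\<^sup>2 + 2 * L\<^sup>2 * (norm (X x))\<^sup>2)"
        by simp
    qed
  qed
  then show ?thesis using X m2 unfolding G_def by auto
qed

end

context mtgc_setup begin

lemma G_noise:
  assumes j: "j < N" "i \<in> C j" and k: "(i,t,e,h) \<in> II" "(i,t,e,h) \<notin> K" and X: "G K X"
    and K': "K \<union> {(i,t,e,h)} \<subseteq> K'" "K' \<subseteq> II"
  shows "G K' (\<lambda>\<omega>. gF i (X \<omega>) (\<xi> i t e h \<omega>))"
proof -
  have K: "K \<subseteq> II" using X unfolding G_def by auto
  have mX: "X \<in> borel_measurable (NK K)" using X unfolding G_def by auto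
  have mX': "X \<in> borel_measurable (NK K')" using meas_NK_mono[OF mX] K' by auto
  have mxi: "\<xi> i t e h \<in> NK K' \<rightarrow>\<^sub>M D i" using xi_NK[of i t e h K'] K' by auto
  have pair: "(\<lambda>\<omega>. (X \<omega>, \<xi> i t e h \<omega>)) \<in> NK K' \<rightarrow>\<^sub>M borel \<Otimes>\<^sub>M D i"
    using mX' mxi by (rule measurable_Pair)
  have m: "(\<lambda>\<omega>. gF i (X \<omega>) (\<xi> i t e h \<omega>)) \<in> borel_measurable (NK K')"
    using measurable_compose[OF pair gF_meas[OF j]] by simp
  have mM[measurable]: "(\<lambda>\<omega>. gF i (X \<omega>) (\<xi> i t e h \<omega>)) \<in> borel_measurable M"
    using meas_NK_M[OF m K'(2)] .
  have gm[measurable]: "(\<lambda>p. gF i (fst p) (snd p)) \<in> borel_measurable (borel \<Otimes>\<^sub>M D i)"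
    using gF_meas[OF j] .
  have phi: "(\<lambda>p. ennreal ((norm (gF i (fst p) (snd p)))\<^sup>2)) \<in> borel_measurable (borel \<Otimes>\<^sub>M D i)"
    by measurable
  have XM[measurable]: "X \<in> borel_measurable M" using G_M[OF X] .
  note GF_meas[OF j, measurable]
  have gi: "integrable M (\<lambda>\<omega>. (norm (GF i (X \<omega>)))\<^sup>2 + \<sigma>\<^sup>2)"
    using G_int[OF G_GF[OF j X]] by auto
  have "(\<integral>\<^sup>+\<omega>. ennreal ((norm (gF i (X \<omega>) (\<xi> i t e h \<omega>)))\<^sup>2) \<partial>M)
      = (\<integral>\<^sup>+\<omega>. (\<integral>\<^sup>+s. ennreal ((norm (gF i (X \<omega>) s))\<^sup>2) \<partial>D i) \<partial>M)"
    using indep_fubini[OF K k mX phi] by simp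
  also have "\<dots> \<le> (\<integral>\<^sup>+\<omega>. ennreal ((norm (GF i (X \<omega>)))\<^sup>2 + \<sigma>\<^sup>2) \<partial>M)"
  proof (rule nn_integral_mono)
    fix \<omega>
    show "(\<integral>\<^sup>+s. ennreal ((norm (gF i (X \<omega>) s))\<^sup>2) \<partial>D i) \<le> ennreal ((norm (GF i (X \<omega>)))\<^sup>2 + \<sigma>\<^sup>2)"
      using noise_D_bound[OF j, of "GF i (X \<omega>)" "X \<omega>"] by simp
  qed
  also have "\<dots> = ennreal (\<integral>\<omega>. (norm (GF i (X \<omega>)))\<^sup>2 + \<sigma>\<^sup>2 \<partial>M)"
    by (rule nn_integral_eq_integral[OF gi]) auto
  also have "\<dots> < \<infinity>" by simp
  finally have "integrable M (\<lambda>\<omega>. (norm (gF i (X \<omega>) (\<xi> i t e h \<omega>)))\<^sup>2)"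
    by (intro integrableI_nonneg) auto
  then show ?thesis using m K' unfolding G_def by auto
qed

end


lemma inner_Suc_fst: "fst (mtgc_inner g C H \<gamma> xi j t xb y (Suc e)) =
   (1 / real (card (C j))) *\<^sub>R (\<Sum>i\<in>C j. mtgc_local g \<gamma> i (xi i t e) (fst (mtgc_inner g C H \<gamma> xi j t xb y e)) (snd (mtgc_inner g C H \<gamma> xi j t xb y e) i + y) H)"
  by (simp add: split_beta Let_def)

lemma inner_Suc_snd: "snd (mtgc_inner g C H \<gamma> xi j t xb y (Suc e)) i =
   snd (mtgc_inner g C H \<gamma> xi j t xb y e) i + (1 / (real H * \<gamma>)) *\<^sub>R
     (mtgc_local g \<gamma> i (xi i t e) (fst (mtgc_inner g C H \<gamma> xi j t xb y e)) (snd (mtgc_inner g C H \<gamma> xi j t xb y e) i + y) H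
      - fst (mtgc_inner g C H \<gamma> xi j t xb y (Suc e)))"
  by (simp add: split_beta Let_def)

lemma outer_Suc_fst: "fst (mtgc_outer g C N E H \<gamma> x0 xi (Suc t)) =
   (1 / real N) *\<^sub>R (\<Sum>j<N. fst (mtgc_inner g C H \<gamma> xi j t (fst (mtgc_outer g C N E H \<gamma> x0 xi t)) (snd (mtgc_outer g C N E H \<gamma> x0 xi t) j) E))"
  by (simp add: split_beta Let_def)

lemma outer_Suc_snd: "snd (mtgc_outer g C N E H \<gamma> x0 xi (Suc t)) j =
   snd (mtgc_outer g C N E H \<gamma> x0 xi t) j + (1 / (real H * real E * \<gamma>)) *\<^sub>R
    (fst (mtgc_inner g C H \<gamma> xi j t (fst (mtgc_outer g C N E H \<gamma> x0 xi t)) (snd (mtgc_outer g C N E H \<gamma> x0 xi t) j) E)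
     - fst (mtgc_outer g C N E H \<gamma> x0 xi (Suc t)))"
  by (simp add: split_beta Let_def)
context mtgc_setup begin

definition "Bs (t::nat) (e::nat) (h::nat) = {(i,t',e',h'). (i,t',e',h') \<in> II \<and> (t' < t \<or> (t' = t \<and> (e' < e \<or> (e' = e \<and> h' < h))))}"

lemma Bs_II: "Bs t e h \<subseteq> II" unfolding Bs_def by auto
lemma Bs_mono_h: "h \<le> h' \<Longrightarrow> Bs t e h \<subseteq> Bs t e h'" unfolding Bs_def by auto
lemma Bs_Suc_e: "Bs t e h \<subseteq> Bs t (Suc e) 0" unfolding Bs_def by auto
lemma Bs_e1: "Bs t 0 1 \<subseteq> Bs t e 1" unfolding Bs_def by auto
lemma Bs_e0: "Bs t 0 0 \<subseteq> Bs t e h" unfolding Bs_def by auto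
lemma Bs_Suc_t: "Bs t e h \<subseteq> Bs (Suc t) 0 0" unfolding Bs_def by auto
lemma Bs_notin: "(i,t,e,h) \<notin> Bs t e h" unfolding Bs_def by simp
lemma Bs_step: "(i,t,e,h) \<in> II \<Longrightarrow> Bs t e h \<union> {(i,t,e,h)} \<subseteq> Bs t e (Suc h)" unfolding Bs_def by auto

lemma inII: "j < N \<Longrightarrow> i \<in> C j \<Longrightarrow> e < E \<Longrightarrow> h < H \<Longrightarrow> (i,t,e,h) \<in> II" by auto

lemma G_noise':
  assumes j: "j < N" "i \<in> C j" and eh: "e < E" "h < H" and X: "G (Bs t e h) X"
  shows "G (Bs t e (Suc h)) (\<lambda>\<omega>. gF i (X \<omega>) (\<xi> i t e h \<omega>))"
  using G_noise[OF j inII[OF j eh] Bs_notin X Bs_step[OF inII[OF j eh]] Bs_II] .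

lemma local_G:
  assumes j: "j < N" "i \<in> C j" and e: "e < E" and X0: "G (Bs t e 0) X0" and c: "G (Bs t e 1) c"
  shows "h \<le> H \<Longrightarrow> G (Bs t e h) (\<lambda>\<omega>. mtgc_local gF \<gamma> i (sample_path \<xi> \<omega> i t e) (X0 \<omega>) (c \<omega>) h)"
proof (induction h)
  case 0 then show ?case using X0 by simp
next
  case (Suc h)
  let ?x = "\<lambda>\<omega>. mtgc_local gF \<gamma> i (sample_path \<xi> \<omega> i t e) (X0 \<omega>) (c \<omega>) h"
  have xh: "G (Bs t e h) ?x" using Suc by simp
  have hH: "h < H" using Suc by simp
  have g: "G (Bs t e (Suc h)) (\<lambda>\<omega>. gF i (?x \<omega>) (\<xi> i t e h \<omega>))" by (rule G_noise'[OF j e hH xh])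
  have c': "G (Bs t e (Suc h)) c" using G_mono[OF c Bs_mono_h Bs_II] by simp
  have x': "G (Bs t e (Suc h)) ?x" using G_mono[OF xh Bs_mono_h Bs_II] by simp
  have "G (Bs t e (Suc h)) (\<lambda>\<omega>. ?x \<omega> - \<gamma> *\<^sub>R (gF i (?x \<omega>) (\<xi> i t e h \<omega>) + c \<omega>))"
    by (intro G_diff x' G_scale G_add g c')
  then show ?case by (simp add: Let_def sample_path_def)
qed

lemma inner_G:
  assumes j: "j < N" and XB: "G (Bs t 0 0) XB" and Y: "G (Bs t 0 1) Y"
  shows "e \<le> E \<Longrightarrow> G (Bs t e 0) (\<lambda>\<omega>. fst (mtgc_inner gF C H \<gamma> (sample_path \<xi> \<omega>) j t (XB \<omega>) (Y \<omega>) e)) \<and>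
     (\<forall>i\<in>C j. G (Bs t e 1) (\<lambda>\<omega>. snd (mtgc_inner gF C H \<gamma> (sample_path \<xi> \<omega>) j t (XB \<omega>) (Y \<omega>) e) i))"
proof (induction e)
  case 0
  have E0: "0 < E" and H0: "0 < H" using E H by auto
  have XB': "G (Bs t 0 0) XB" using XB .
  have g: "\<And>i. i \<in> C j \<Longrightarrow> G (Bs t 0 1) (\<lambda>\<omega>. gF i (XB \<omega>) (\<xi> i t 0 0 \<omega>))"
    using G_noise'[OF j _ E0 H0 XB'] by simp
  have "\<And>i. i \<in> C j \<Longrightarrow> G (Bs t 0 1) (\<lambda>\<omega>. - gF i (XB \<omega>) (\<xi> i t 0 0 \<omega>)
        + (1 / real (card (C j))) *\<^sub>R (\<Sum>i'\<in>C j. gF i' (XB \<omega>) (\<xi> i' t 0 0 \<omega>)))"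
    by (intro G_add G_uminus G_scale G_sum g C_fin[OF j] Bs_II) auto
  then show ?case using XB by (simp add: sample_path_def)
next
  case (Suc e)
  let ?inn = "\<lambda>\<omega>. mtgc_inner gF C H \<gamma> (sample_path \<xi> \<omega>) j t (XB \<omega>) (Y \<omega>) e"
  have eE: "e < E" using Suc by simp
  have IH1: "G (Bs t e 0) (\<lambda>\<omega>. fst (?inn \<omega>))" and IH2: "\<And>i. i \<in> C j \<Longrightarrow> G (Bs t e 1) (\<lambda>\<omega>. snd (?inn \<omega>) i)"
    using Suc by auto
  have Y': "G (Bs t e 1) Y" using G_mono[OF Y Bs_e1 Bs_II] .
  have xH: "\<And>i. i \<in> C j \<Longrightarrow> G (Bs t (Suc e) 0) (\<lambda>\<omega>. mtgc_local gF \<gamma> i (sample_path \<xi> \<omega> i t e) (fst (?inn \<omega>)) (snd (?inn \<omega>) i + Y \<omega>) H)"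
  proof -
    fix i assume i: "i \<in> C j"
    have c: "G (Bs t e 1) (\<lambda>\<omega>. snd (?inn \<omega>) i + Y \<omega>)" by (intro G_add IH2 i Y')
    have "G (Bs t e H) (\<lambda>\<omega>. mtgc_local gF \<gamma> i (sample_path \<xi> \<omega> i t e) (fst (?inn \<omega>)) (snd (?inn \<omega>) i + Y \<omega>) H)"
      by (rule local_G[OF j i eE IH1 c]) simp
    then show "?thesis i" using G_mono[OF _ Bs_Suc_e Bs_II] by blast
  qed
  have f: "G (Bs t (Suc e) 0) (\<lambda>\<omega>. fst (mtgc_inner gF C H \<gamma> (sample_path \<xi> \<omega>) j t (XB \<omega>) (Y \<omega>) (Suc e)))"
    unfolding inner_Suc_fst by (intro G_scale G_sum C_fin[OF j] Bs_II xH)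
  have z: "\<And>i. i \<in> C j \<Longrightarrow> G (Bs t (Suc e) 1) (\<lambda>\<omega>. snd (mtgc_inner gF C H \<gamma> (sample_path \<xi> \<omega>) j t (XB \<omega>) (Y \<omega>) (Suc e)) i)"
  proof -
    fix i assume i: "i \<in> C j"
    have z0: "G (Bs t (Suc e) 0) (\<lambda>\<omega>. snd (?inn \<omega>) i)" using G_mono[OF IH2[OF i] Bs_Suc_e Bs_II] .
    have "G (Bs t (Suc e) 0) (\<lambda>\<omega>. snd (mtgc_inner gF C H \<gamma> (sample_path \<xi> \<omega>) j t (XB \<omega>) (Y \<omega>) (Suc e)) i)"
      unfolding inner_Suc_snd by (intro G_add z0 G_scale G_diff xH[OF i] f)
    then show "?thesis i" using G_mono[OF _ Bs_mono_h Bs_II] by blast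
  qed
  show ?case using f z by blast
qed

lemma outer_G:
  "G (Bs t 0 0) (\<lambda>\<omega>. fst (mtgc_outer gF C N E H \<gamma> x0 (sample_path \<xi> \<omega>) t)) \<and>
   (\<forall>j<N. G (Bs t 0 1) (\<lambda>\<omega>. snd (mtgc_outer gF C N E H \<gamma> x0 (sample_path \<xi> \<omega>) t) j))"
proof (induction t)
  case 0
  have E0: "0 < E" and H0: "0 < H" using E H by auto
  have X0: "G (Bs 0 0 0) (\<lambda>_. x0)" by (rule G_const[OF Bs_II])
  have g: "\<And>j i. j < N \<Longrightarrow> i \<in> C j \<Longrightarrow> G (Bs 0 0 1) (\<lambda>\<omega>. gF i x0 (\<xi> i 0 0 0 \<omega>))"
    using G_noise'[OF _ _ E0 H0 X0] by simp
  have "\<And>j. j < N \<Longrightarrow> G (Bs 0 0 1) (\<lambda>\<omega>. - (1 / real (card (C j))) *\<^sub>R (\<Sum>i\<in>C j. gF i x0 (\<xi> i 0 0 0 \<omega>))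
             + (1 / real N) *\<^sub>R (\<Sum>j'<N. (1 / real (card (C j'))) *\<^sub>R (\<Sum>i\<in>C j'. gF i x0 (\<xi> i 0 0 0 \<omega>))))"
    by (intro G_add G_uminus G_scale G_sum g C_fin Bs_II finite_lessThan) auto
  then show ?case using X0 by (simp add: sample_path_def)
next
  case (Suc t)
  let ?xb = "\<lambda>\<omega>. fst (mtgc_outer gF C N E H \<gamma> x0 (sample_path \<xi> \<omega>) t)"
  let ?y = "\<lambda>\<omega>. snd (mtgc_outer gF C N E H \<gamma> x0 (sample_path \<xi> \<omega>) t)"
  have xb: "G (Bs t 0 0) ?xb" and y: "\<And>j. j < N \<Longrightarrow> G (Bs t 0 1) (\<lambda>\<omega>. ?y \<omega> j)" using Suc by auto
  have xE: "\<And>j. j < N \<Longrightarrow> G (Bs (Suc t) 0 0) (\<lambda>\<omega>. fst (mtgc_inner gF C H \<gamma> (sample_path \<xi> \<omega>) j t (?xb \<omega>) (?y \<omega> j) E))"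
  proof -
    fix j assume j: "j < N"
    have "G (Bs t E 0) (\<lambda>\<omega>. fst (mtgc_inner gF C H \<gamma> (sample_path \<xi> \<omega>) j t (?xb \<omega>) (?y \<omega> j) E))"
      using inner_G[OF j xb y[OF j]] by simp
    then show "?thesis j" using G_mono[OF _ Bs_Suc_t Bs_II] by blast
  qed
  have f: "G (Bs (Suc t) 0 0) (\<lambda>\<omega>. fst (mtgc_outer gF C N E H \<gamma> x0 (sample_path \<xi> \<omega>) (Suc t)))"
    unfolding outer_Suc_fst by (intro G_scale G_sum finite_lessThan Bs_II xE) simp
  have yy: "\<And>j. j < N \<Longrightarrow> G (Bs (Suc t) 0 1) (\<lambda>\<omega>. snd (mtgc_outer gF C N E H \<gamma> x0 (sample_path \<xi> \<omega>) (Suc t)) j)"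
  proof -
    fix j assume j: "j < N"
    have y0: "G (Bs (Suc t) 0 0) (\<lambda>\<omega>. ?y \<omega> j)" using G_mono[OF y[OF j] Bs_Suc_t Bs_II] .
    have "G (Bs (Suc t) 0 0) (\<lambda>\<omega>. snd (mtgc_outer gF C N E H \<gamma> x0 (sample_path \<xi> \<omega>) (Suc t)) j)"
      unfolding outer_Suc_snd by (intro G_add y0 G_scale G_diff xE[OF j] f)
    then show "?thesis j" using G_mono[OF _ Bs_mono_h Bs_II] by blast
  qed
  show ?case using f yy by blast
qed

end


lemma norm_sum_sq: "finite S \<Longrightarrow> (norm (\<Sum>i\<in>S. f i))\<^sup>2 \<le> real (card S) * (\<Sum>i\<in>S. (norm (f i :: 'b::real_normed_vector))\<^sup>2)"
proof -
  have "norm (\<Sum>i\<in>S. f i) \<le> (\<Sum>i\<in>S. norm (f i))" by (rule norm_sum)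
  then have "(norm (\<Sum>i\<in>S. f i))\<^sup>2 \<le> (\<Sum>i\<in>S. norm (f i))\<^sup>2" by (intro power_mono) auto
  also have "\<dots> \<le> (\<Sum>i\<in>S. (norm (f i))\<^sup>2) * real (card S)" by (rule sum_squared_le_sum_of_squares)
  finally show ?thesis by (simp add: mult.commute)
qed

lemma avg_sq: assumes "finite S" "S \<noteq> {}"
  shows "(norm ((1 / real (card S)) *\<^sub>R (\<Sum>i\<in>S. f i)))\<^sup>2 \<le> (1 / real (card S)) * (\<Sum>i\<in>S. (norm (f i :: 'b::real_normed_vector))\<^sup>2)"
proof -
  have n: "real (card S) > 0" using assms by (simp add: card_gt_0_iff)
  have "(norm ((1 / real (card S)) *\<^sub>R (\<Sum>i\<in>S. f i)))\<^sup>2 = (1 / real (card S))\<^sup>2 * (norm (\<Sum>i\<in>S. f i))\<^sup>2"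
    by (simp add: power_divide)
  also have "\<dots> \<le> (1 / real (card S))\<^sup>2 * (real (card S) * (\<Sum>i\<in>S. (norm (f i))\<^sup>2))"
    by (intro mult_left_mono norm_sum_sq assms) auto
  also have "\<dots> = (1 / real (card S)) * (\<Sum>i\<in>S. (norm (f i))\<^sup>2)"
    using n by (simp add: power2_eq_square)
  finally show ?thesis .
qed

lemma sq_add_le': "(norm (x + y))\<^sup>2 \<le> 2 * (norm x)\<^sup>2 + 2 * (norm (y::'b::real_normed_vector))\<^sup>2"
proof -
  have "norm (x + y) \<le> norm x + norm y" by (rule norm_triangle_ineq)
  then have "(norm (x + y))\<^sup>2 \<le> (norm x + norm y)\<^sup>2" by (intro power_mono) auto
  also have "\<dots> \<le> 2 * (norm x)\<^sup>2 + 2 * (norm y)\<^sup>2"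
    using power2_sum[of "norm x" "norm y"] power2_diff[of "norm x" "norm y"] zero_le_power2[of "norm x - norm y"]
    by linarith
  finally show ?thesis .
qed

lemma sq4: "(norm (a + b + c + d))\<^sup>2 \<le> 4 * ((norm a)\<^sup>2 + (norm b)\<^sup>2 + (norm c)\<^sup>2 + (norm (d::'b::real_normed_vector))\<^sup>2)"
proof -
  have "(norm ((a + b) + (c + d)))\<^sup>2 \<le> 2 * (norm (a + b))\<^sup>2 + 2 * (norm (c + d))\<^sup>2" by (rule sq_add_le')
  moreover have "(norm (a + b))\<^sup>2 \<le> 2 * (norm a)\<^sup>2 + 2 * (norm b)\<^sup>2" by (rule sq_add_le')
  moreover have "(norm (c + d))\<^sup>2 \<le> 2 * (norm c)\<^sup>2 + 2 * (norm d)\<^sup>2" by (rule sq_add_le')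
  ultimately show ?thesis by (simp add: add.assoc)
qed

lemma pointwise_bound:
  fixes x g :: "nat \<Rightarrow> nat \<Rightarrow> 'b::real_normed_vector" and GF :: "nat \<Rightarrow> 'b \<Rightarrow> 'b"
    and H :: nat and L \<gamma> :: real and y xb xh gf :: 'b
  assumes S: "finite S" "S \<noteq> {}" and Lip: "\<And>i u v. i \<in> S \<Longrightarrow> norm (GF i u - GF i v) \<le> L * norm (u - v)"
    and gam: "\<gamma> > 0"
  defines "n \<equiv> real (card S)"
  defines "T \<equiv> (\<Sum>h<H. \<Sum>i\<in>S. g i h - GF i (x i h))"
  defines "Delta \<equiv> - \<gamma> *\<^sub>R ((1 / n) *\<^sub>R T + (\<Sum>h<H. (1 / n) *\<^sub>R (\<Sum>i\<in>S. GF i (x i h)) + y))"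
  shows "(norm Delta)\<^sup>2 \<le> 2 * \<gamma>\<^sup>2 / n\<^sup>2 * (norm T)\<^sup>2
     + 8 * \<gamma>\<^sup>2 * real H * (\<Sum>h<H. L\<^sup>2 * ((1 / n) * (\<Sum>i\<in>S. (norm (xb - x i h))\<^sup>2)))
     + 8 * \<gamma>\<^sup>2 * (real H)\<^sup>2 * (L\<^sup>2 * (norm (xh - xb))\<^sup>2 + (norm (y + (1 / n) *\<^sub>R (\<Sum>i\<in>S. GF i xh) - gf))\<^sup>2 + (norm gf)\<^sup>2)"
proof -
  have n: "n > 0" unfolding n_def using S by (simp add: card_gt_0_iff)
  define b where "b h = (1 / n) *\<^sub>R (\<Sum>i\<in>S. GF i (x i h)) + y" for h
  define al where "al h = (1 / n) *\<^sub>R (\<Sum>i\<in>S. GF i (x i h) - GF i xb)" for h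
  define be where "be = (1 / n) *\<^sub>R (\<Sum>i\<in>S. GF i xb - GF i xh)"
  define Yv where "Yv = y + (1 / n) *\<^sub>R (\<Sum>i\<in>S. GF i xh) - gf"
  have bdec: "b h = al h + be + Yv + gf" for h
    unfolding b_def al_def be_def Yv_def
    by (simp add: sum_subtractf scaleR_diff_right algebra_simps)
  have al: "(norm (al h))\<^sup>2 \<le> L\<^sup>2 * ((1 / n) * (\<Sum>i\<in>S. (norm (xb - x i h))\<^sup>2))" for h
  proof -
    have "(norm (al h))\<^sup>2 \<le> (1 / n) * (\<Sum>i\<in>S. (norm (GF i (x i h) - GF i xb))\<^sup>2)"
      unfolding al_def n_def by (rule avg_sq[OF S])
    also have "\<dots> \<le> (1 / n) * (\<Sum>i\<in>S. L\<^sup>2 * (norm (xb - x i h))\<^sup>2)"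
    proof (intro mult_left_mono sum_mono)
      fix i assume i: "i \<in> S"
      have "norm (GF i (x i h) - GF i xb) \<le> L * norm (x i h - xb)" by (rule Lip[OF i])
      then have "(norm (GF i (x i h) - GF i xb))\<^sup>2 \<le> (L * norm (x i h - xb))\<^sup>2" by (intro power_mono) auto
      then show "(norm (GF i (x i h) - GF i xb))\<^sup>2 \<le> L\<^sup>2 * (norm (xb - x i h))\<^sup>2"
        by (simp add: power_mult_distrib norm_minus_commute)
    qed (use n in auto)
    also have "\<dots> = L\<^sup>2 * ((1 / n) * (\<Sum>i\<in>S. (norm (xb - x i h))\<^sup>2))"
      by (simp add: sum_distrib_left)
    finally show ?thesis .
  qed
  have be: "(norm be)\<^sup>2 \<le> L\<^sup>2 * (norm (xh - xb))\<^sup>2"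
  proof -
    have "(norm be)\<^sup>2 \<le> (1 / n) * (\<Sum>i\<in>S. (norm (GF i xb - GF i xh))\<^sup>2)"
      unfolding be_def n_def by (rule avg_sq[OF S])
    also have "\<dots> \<le> (1 / n) * (\<Sum>i\<in>S. L\<^sup>2 * (norm (xh - xb))\<^sup>2)"
    proof (intro mult_left_mono sum_mono)
      fix i assume i: "i \<in> S"
      have "norm (GF i xb - GF i xh) \<le> L * norm (xb - xh)" by (rule Lip[OF i])
      then have "(norm (GF i xb - GF i xh))\<^sup>2 \<le> (L * norm (xb - xh))\<^sup>2" by (intro power_mono) auto
      then show "(norm (GF i xb - GF i xh))\<^sup>2 \<le> L\<^sup>2 * (norm (xh - xb))\<^sup>2"
        by (simp add: power_mult_distrib norm_minus_commute)
    qed (use n in auto)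
    also have "\<dots> = L\<^sup>2 * (norm (xh - xb))\<^sup>2" using n by (simp add: n_def)
    finally show ?thesis .
  qed
  have bh: "(norm (b h))\<^sup>2 \<le> 4 * (L\<^sup>2 * ((1 / n) * (\<Sum>i\<in>S. (norm (xb - x i h))\<^sup>2)) + (L\<^sup>2 * (norm (xh - xb))\<^sup>2 + (norm Yv)\<^sup>2 + (norm gf)\<^sup>2))" for h
    using sq4[of "al h" be Yv gf] al[of h] be unfolding bdec by simp
  have R: "(norm (\<Sum>h<H. b h))\<^sup>2 \<le> real H * (\<Sum>h<H. (norm (b h))\<^sup>2)"
    using norm_sum_sq[of "{..<H}" b] by simp
  also have "\<dots> \<le> real H * (\<Sum>h<H. 4 * (L\<^sup>2 * ((1 / n) * (\<Sum>i\<in>S. (norm (xb - x i h))\<^sup>2)) + (L\<^sup>2 * (norm (xh - xb))\<^sup>2 + (norm Yv)\<^sup>2 + (norm gf)\<^sup>2)))"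
    by (intro mult_left_mono sum_mono bh) auto
  also have "\<dots> = 4 * real H * (\<Sum>h<H. L\<^sup>2 * ((1 / n) * (\<Sum>i\<in>S. (norm (xb - x i h))\<^sup>2)))
      + 4 * (real H)\<^sup>2 * (L\<^sup>2 * (norm (xh - xb))\<^sup>2 + (norm Yv)\<^sup>2 + (norm gf)\<^sup>2)"
    by (simp add: sum.distrib sum_distrib_left power2_eq_square algebra_simps)
  finally have R': "(norm (\<Sum>h<H. b h))\<^sup>2 \<le> \<dots>" .
  have "Delta = - \<gamma> *\<^sub>R ((1 / n) *\<^sub>R T + (\<Sum>h<H. b h))" unfolding Delta_def b_def ..
  then have "(norm Delta)\<^sup>2 = \<gamma>\<^sup>2 * (norm ((1 / n) *\<^sub>R T + (\<Sum>h<H. b h)))\<^sup>2"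
    by (simp add: power_mult_distrib)
  also have "\<dots> \<le> \<gamma>\<^sup>2 * (2 * (norm ((1 / n) *\<^sub>R T))\<^sup>2 + 2 * (norm (\<Sum>h<H. b h))\<^sup>2)"
    by (intro mult_left_mono sq_add_le') auto
  also have "(norm ((1 / n) *\<^sub>R T))\<^sup>2 = (norm T)\<^sup>2 / n\<^sup>2"
    using n by (simp add: power_mult_distrib power_divide)
  finally have "(norm Delta)\<^sup>2 \<le> \<gamma>\<^sup>2 * (2 * ((norm T)\<^sup>2 / n\<^sup>2) + 2 * (norm (\<Sum>h<H. b h))\<^sup>2)" .
  also have "\<dots> \<le> \<gamma>\<^sup>2 * (2 * ((norm T)\<^sup>2 / n\<^sup>2) + 2 * (4 * real H * (\<Sum>h<H. L\<^sup>2 * ((1 / n) * (\<Sum>i\<in>S. (norm (xb - x i h))\<^sup>2)))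
      + 4 * (real H)\<^sup>2 * (L\<^sup>2 * (norm (xh - xb))\<^sup>2 + (norm Yv)\<^sup>2 + (norm gf)\<^sup>2)))"
    using R' by (intro mult_left_mono add_left_mono) auto
  also have "\<dots> = 2 * \<gamma>\<^sup>2 / n\<^sup>2 * (norm T)\<^sup>2
     + 8 * \<gamma>\<^sup>2 * real H * (\<Sum>h<H. L\<^sup>2 * ((1 / n) * (\<Sum>i\<in>S. (norm (xb - x i h))\<^sup>2)))
     + 8 * \<gamma>\<^sup>2 * (real H)\<^sup>2 * (L\<^sup>2 * (norm (xh - xb))\<^sup>2 + (norm Yv)\<^sup>2 + (norm gf)\<^sup>2)"
    by (simp add: algebra_simps)
  finally show ?thesis unfolding Yv_def .
qed


context mtgc_setup begin

lemma meas_noise: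
  assumes j: "j < N" "i \<in> C j" and K: "K \<subseteq> II" "(i,t,e,h) \<in> K" and X: "X \<in> borel_measurable (NK K)"
  shows "(\<lambda>\<omega>. gF i (X \<omega>) (\<xi> i t e h \<omega>)) \<in> borel_measurable (NK K)"
proof -
  have mxi: "\<xi> i t e h \<in> NK K \<rightarrow>\<^sub>M D i" using xi_NK[of i t e h K] K by auto
  have pair: "(\<lambda>\<omega>. (X \<omega>, \<xi> i t e h \<omega>)) \<in> NK K \<rightarrow>\<^sub>M borel \<Otimes>\<^sub>M D i"
    using X mxi by (rule measurable_Pair)
  show ?thesis using measurable_compose[OF pair gF_meas[OF j]] by simp
qed

lemma meas_eps:
  assumes j: "j < N" "i \<in> C j" and K: "K \<subseteq> II" "(i,t,e,h) \<in> K" and X: "X \<in> borel_measurable (NK K)"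
  shows "(\<lambda>\<omega>. gF i (X \<omega>) (\<xi> i t e h \<omega>) - GF i (X \<omega>)) \<in> borel_measurable (NK K)"
proof -
  have "(\<lambda>\<omega>. GF i (X \<omega>)) \<in> borel_measurable (NK K)"
    using measurable_compose[OF X GF_meas[OF j]] by (simp add: comp_def)
  then show ?thesis using meas_noise[OF j K X] by (intro borel_measurable_diff)
qed

lemma noise_step:
  assumes j: "j < N" "i \<in> C j" and K: "K \<subseteq> II" "(i,t,e,h) \<in> II" "(i,t,e,h) \<notin> K"
    and A: "A \<in> borel_measurable (NK K)" and X: "X \<in> borel_measurable (NK K)"
  shows "(\<integral>\<^sup>+\<omega>. ennreal ((norm (A \<omega> + (gF i (X \<omega>) (\<xi> i t e h \<omega>) - GF i (X \<omega>))))\<^sup>2) \<partial>M)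
      \<le> (\<integral>\<^sup>+\<omega>. ennreal ((norm (A \<omega>))\<^sup>2) \<partial>M) + ennreal (\<sigma>\<^sup>2)"
proof -
  have U: "(\<lambda>\<omega>. (A \<omega>, X \<omega>)) \<in> NK K \<rightarrow>\<^sub>M borel \<Otimes>\<^sub>M borel" using A X by (rule measurable_Pair)
  have gm: "(\<lambda>p. gF i (fst p) (snd p)) \<in> borel_measurable (borel \<Otimes>\<^sub>M D i)" using gF_meas[OF j] .
  have pm: "(\<lambda>p. (snd (fst p), snd p)) \<in> ((borel \<Otimes>\<^sub>M borel) \<Otimes>\<^sub>M D i) \<rightarrow>\<^sub>M (borel \<Otimes>\<^sub>M D i)"
    by measurable
  have gm2[measurable]: "(\<lambda>p. gF i (snd (fst p)) (snd p)) \<in> borel_measurable ((borel \<Otimes>\<^sub>M (borel::'a measure)) \<Otimes>\<^sub>M D i)"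
    using measurable_compose[OF pm gm] by simp
  note GF_meas[OF j, measurable]
  have phi: "(\<lambda>p. ennreal ((norm (fst (fst p) + (gF i (snd (fst p)) (snd p) - GF i (snd (fst p)))))\<^sup>2))
     \<in> borel_measurable ((borel \<Otimes>\<^sub>M (borel::'a measure)) \<Otimes>\<^sub>M D i)"
    by measurable
  have AM[measurable]: "A \<in> borel_measurable M" using meas_NK_M[OF A K(1)] .
  have "(\<integral>\<^sup>+\<omega>. ennreal ((norm (A \<omega> + (gF i (X \<omega>) (\<xi> i t e h \<omega>) - GF i (X \<omega>))))\<^sup>2) \<partial>M)
      = (\<integral>\<^sup>+\<omega>. (\<integral>\<^sup>+s. ennreal ((norm (A \<omega> + (gF i (X \<omega>) s - GF i (X \<omega>))))\<^sup>2) \<partial>D i) \<partial>M)"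
    using indep_fubini[OF K U phi] by simp
  also have "\<dots> \<le> (\<integral>\<^sup>+\<omega>. ennreal ((norm (A \<omega>))\<^sup>2 + \<sigma>\<^sup>2) \<partial>M)"
    by (intro nn_integral_mono noise_D_bound[OF j])
  also have "\<dots> = (\<integral>\<^sup>+\<omega>. ennreal ((norm (A \<omega>))\<^sup>2) + ennreal (\<sigma>\<^sup>2) \<partial>M)"
    by (intro nn_integral_cong) (simp add: ennreal_plus)
  also have "\<dots> = (\<integral>\<^sup>+\<omega>. ennreal ((norm (A \<omega>))\<^sup>2) \<partial>M) + ennreal (\<sigma>\<^sup>2)"
    by (subst nn_integral_add) (auto simp: emeasure_space_1)
  finally show ?thesis .
qed

lemma noise_clients:
  assumes j: "j < N" and eh: "e < E" "h < H" and A: "A \<in> borel_measurable (NK (Bs t e h))"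
    and X: "\<And>i. i \<in> C j \<Longrightarrow> X i \<in> borel_measurable (NK (Bs t e h))"
    and S: "S \<subseteq> C j"
  shows "(\<lambda>\<omega>. A \<omega> + (\<Sum>i\<in>S. gF i (X i \<omega>) (\<xi> i t e h \<omega>) - GF i (X i \<omega>))) \<in> borel_measurable (NK (Bs t e h \<union> {(i,t,e,h) | i. i \<in> S}))
    \<and> (\<integral>\<^sup>+\<omega>. ennreal ((norm (A \<omega> + (\<Sum>i\<in>S. gF i (X i \<omega>) (\<xi> i t e h \<omega>) - GF i (X i \<omega>))))\<^sup>2) \<partial>M)
      \<le> (\<integral>\<^sup>+\<omega>. ennreal ((norm (A \<omega>))\<^sup>2) \<partial>M) + ennreal (real (card S) * \<sigma>\<^sup>2)"
proof -
  have fin: "finite S" using finite_subset[OF S C_fin[OF j]] .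
  show ?thesis using fin S
  proof (induction S rule: finite_subset_induct')
    case empty then show ?case using A by simp
  next
    case (insert i F)
    let ?K = "Bs t e h \<union> {(i,t,e,h) | i. i \<in> F}"
    let ?K' = "Bs t e h \<union> {(i',t,e,h) | i'. i' \<in> insert i F}"
    let ?A = "\<lambda>\<omega>. A \<omega> + (\<Sum>i\<in>F. gF i (X i \<omega>) (\<xi> i t e h \<omega>) - GF i (X i \<omega>))"
    have i: "i \<in> C j" using insert by auto
    have KII: "?K \<subseteq> II" using Bs_II insert(3) j eh by auto
    have K'II: "?K' \<subseteq> II" using Bs_II insert(3) j eh i by auto
    have k: "(i,t,e,h) \<in> II" using j i eh by auto
    have kn: "(i,t,e,h) \<notin> ?K" using insert(4) Bs_notin by auto
    have Am: "?A \<in> borel_measurable (NK ?K)" using insert(5) by simp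
    have Xm: "X i \<in> borel_measurable (NK ?K)" using meas_NK_mono[OF X[OF i]] by auto
    have st: "(\<integral>\<^sup>+\<omega>. ennreal ((norm (?A \<omega> + (gF i (X i \<omega>) (\<xi> i t e h \<omega>) - GF i (X i \<omega>))))\<^sup>2) \<partial>M)
      \<le> (\<integral>\<^sup>+\<omega>. ennreal ((norm (?A \<omega>))\<^sup>2) \<partial>M) + ennreal (\<sigma>\<^sup>2)"
      by (rule noise_step[OF j i KII k kn Am Xm])
    have eq: "\<And>\<omega>. A \<omega> + (\<Sum>i\<in>insert i F. gF i (X i \<omega>) (\<xi> i t e h \<omega>) - GF i (X i \<omega>))
       = ?A \<omega> + (gF i (X i \<omega>) (\<xi> i t e h \<omega>) - GF i (X i \<omega>))"
      using insert(1,4) by (simp add: algebra_simps)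
    have KK': "?K \<subseteq> ?K'" by auto
    have m1: "?A \<in> borel_measurable (NK ?K')" using meas_NK_mono[OF Am KK'] .
    have m2: "(\<lambda>\<omega>. gF i (X i \<omega>) (\<xi> i t e h \<omega>) - GF i (X i \<omega>)) \<in> borel_measurable (NK ?K')"
      by (rule meas_eps[OF j i K'II]) (use meas_NK_mono[OF X[OF i]] in auto)
    have meas: "(\<lambda>\<omega>. A \<omega> + (\<Sum>i\<in>insert i F. gF i (X i \<omega>) (\<xi> i t e h \<omega>) - GF i (X i \<omega>))) \<in> borel_measurable (NK ?K')"
      unfolding eq using m1 m2 by (rule borel_measurable_add)
    have "(\<integral>\<^sup>+\<omega>. ennreal ((norm (A \<omega> + (\<Sum>i\<in>insert i F. gF i (X i \<omega>) (\<xi> i t e h \<omega>) - GF i (X i \<omega>))))\<^sup>2) \<partial>M)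
       \<le> (\<integral>\<^sup>+\<omega>. ennreal ((norm (?A \<omega>))\<^sup>2) \<partial>M) + ennreal (\<sigma>\<^sup>2)" unfolding eq by (rule st)
    also have "\<dots> \<le> (\<integral>\<^sup>+\<omega>. ennreal ((norm (A \<omega>))\<^sup>2) \<partial>M) + ennreal (real (card F) * \<sigma>\<^sup>2) + ennreal (\<sigma>\<^sup>2)"
      using insert(5) by (intro add_right_mono) simp
    also have "\<dots> = (\<integral>\<^sup>+\<omega>. ennreal ((norm (A \<omega>))\<^sup>2) \<partial>M) + ennreal (real (card (insert i F)) * \<sigma>\<^sup>2)"
      using insert(1,4) by (simp add: add.assoc ennreal_plus[symmetric] algebra_simps del: ennreal_plus)
    finally show ?case using meas by simp
  qed
qed

lemma noise_total:
  assumes j: "j < N" and e: "e < E"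
    and X: "\<And>i h. i \<in> C j \<Longrightarrow> h < H \<Longrightarrow> X i h \<in> borel_measurable (NK (Bs t e h))"
  shows "h \<le> H \<Longrightarrow> (\<lambda>\<omega>. \<Sum>h'<h. \<Sum>i\<in>C j. gF i (X i h' \<omega>) (\<xi> i t e h' \<omega>) - GF i (X i h' \<omega>)) \<in> borel_measurable (NK (Bs t e h))
    \<and> (\<integral>\<^sup>+\<omega>. ennreal ((norm (\<Sum>h'<h. \<Sum>i\<in>C j. gF i (X i h' \<omega>) (\<xi> i t e h' \<omega>) - GF i (X i h' \<omega>)))\<^sup>2) \<partial>M)
      \<le> ennreal (real h * real (card (C j)) * \<sigma>\<^sup>2)"
proof (induction h)
  case 0 then show ?case by simp
next
  case (Suc h)
  let ?T = "\<lambda>\<omega>. \<Sum>h'<h. \<Sum>i\<in>C j. gF i (X i h' \<omega>) (\<xi> i t e h' \<omega>) - GF i (X i h' \<omega>)"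
  have hH: "h < H" using Suc by simp
  have IH: "?T \<in> borel_measurable (NK (Bs t e h))"
     "(\<integral>\<^sup>+\<omega>. ennreal ((norm (?T \<omega>))\<^sup>2) \<partial>M) \<le> ennreal (real h * real (card (C j)) * \<sigma>\<^sup>2)"
    using Suc by auto
  let ?E = "\<lambda>\<omega>. \<Sum>i\<in>C j. gF i (X i h \<omega>) (\<xi> i t e h \<omega>) - GF i (X i h \<omega>)"
  have nc: "(\<lambda>\<omega>. ?T \<omega> + ?E \<omega>) \<in> borel_measurable (NK (Bs t e h \<union> {(i,t,e,h) | i. i \<in> C j}))
    \<and> (\<integral>\<^sup>+\<omega>. ennreal ((norm (?T \<omega> + ?E \<omega>))\<^sup>2) \<partial>M) \<le> (\<integral>\<^sup>+\<omega>. ennreal ((norm (?T \<omega>))\<^sup>2) \<partial>M) + ennreal (real (card (C j)) * \<sigma>\<^sup>2)"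
    by (rule noise_clients[OF j e hH IH(1)]) (use X hH in auto)
  have sub: "Bs t e h \<union> {(i,t,e,h) | i. i \<in> C j} \<subseteq> Bs t e (Suc h)"
    using j e hH by (auto simp: Bs_def)
  have eq: "(\<lambda>\<omega>. \<Sum>h'<Suc h. \<Sum>i\<in>C j. gF i (X i h' \<omega>) (\<xi> i t e h' \<omega>) - GF i (X i h' \<omega>)) = (\<lambda>\<omega>. ?T \<omega> + ?E \<omega>)"
    by simp
  have "(\<integral>\<^sup>+\<omega>. ennreal ((norm (?T \<omega> + ?E \<omega>))\<^sup>2) \<partial>M) \<le> ennreal (real h * real (card (C j)) * \<sigma>\<^sup>2) + ennreal (real (card (C j)) * \<sigma>\<^sup>2)"
    using nc IH(2) by (meson add_right_mono order_trans)
  also have "\<dots> = ennreal (real (Suc h) * real (card (C j)) * \<sigma>\<^sup>2)"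
    by (simp add: ennreal_plus[symmetric] algebra_simps del: ennreal_plus)
  finally have b: "(\<integral>\<^sup>+\<omega>. ennreal ((norm (?T \<omega> + ?E \<omega>))\<^sup>2) \<partial>M) \<le> ennreal (real (Suc h) * real (card (C j)) * \<sigma>\<^sup>2)" .
  have m: "(\<lambda>\<omega>. ?T \<omega> + ?E \<omega>) \<in> borel_measurable (NK (Bs t e (Suc h)))" using nc meas_NK_mono[OF _ sub] by blast
  show ?case using b m by simp
qed

end


lemma z_sum_zero:
  assumes "finite (C j)" "C j \<noteq> {}"
  shows "(\<Sum>i\<in>C j. snd (mtgc_inner g C H \<gamma> xi j t xb y e) i) = 0"
proof (induction e)
  case 0
  have n: "real (card (C j)) \<noteq> 0" using assms by simp
  have "(\<Sum>i\<in>C j. snd (mtgc_inner g C H \<gamma> xi j t xb y 0) i)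
     = - (\<Sum>i\<in>C j. g i xb (xi i t 0 0)) + real (card (C j)) *\<^sub>R ((1 / real (card (C j))) *\<^sub>R (\<Sum>i'\<in>C j. g i' xb (xi i' t 0 0)))"
    by (simp only: mtgc_inner.simps snd_conv sum.distrib sum_negf sum_constant_scaleR)
  also have "\<dots> = 0" using n by simp
  finally show ?case .
next
  case (Suc e)
  let ?xH = "\<lambda>i. mtgc_local g \<gamma> i (xi i t e) (fst (mtgc_inner g C H \<gamma> xi j t xb y e)) (snd (mtgc_inner g C H \<gamma> xi j t xb y e) i + y) H"
  have n: "real (card (C j)) \<noteq> 0" using assms by simp
  let ?m = "fst (mtgc_inner g C H \<gamma> xi j t xb y (Suc e))"
  let ?c = "1 / (real H * \<gamma>)"
  have "(\<Sum>i\<in>C j. snd (mtgc_inner g C H \<gamma> xi j t xb y (Suc e)) i)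
      = (\<Sum>i\<in>C j. snd (mtgc_inner g C H \<gamma> xi j t xb y e) i + ?c *\<^sub>R (?xH i - ?m))"
    by (simp only: inner_Suc_snd)
  also have "\<dots> = (\<Sum>i\<in>C j. snd (mtgc_inner g C H \<gamma> xi j t xb y e) i) + ?c *\<^sub>R ((\<Sum>i\<in>C j. ?xH i) - real (card (C j)) *\<^sub>R ?m)"
    by (simp add: sum.distrib scaleR_diff_right sum_subtractf sum_constant_scaleR scaleR_sum_right)
  also have "real (card (C j)) *\<^sub>R ?m = (\<Sum>i\<in>C j. ?xH i)"
    using n by (simp only: inner_Suc_fst scaleR_scaleR) simp
  also have "(\<Sum>i\<in>C j. snd (mtgc_inner g C H \<gamma> xi j t xb y e) i) = 0" using Suc .
  finally show ?case by simp
qed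

lemma local_tel: "mtgc_local g \<gamma> i s x0 c h = x0 - \<gamma> *\<^sub>R (\<Sum>h'<h. g i (mtgc_local g \<gamma> i s x0 c h') (s h') + c)"
  by (induction h) (simp_all add: Let_def algebra_simps)

lemma delta_formula:
  fixes xH :: "nat \<Rightarrow> 'b::real_vector" and H :: nat
  assumes S: "finite S" "S \<noteq> {}" and z: "(\<Sum>i\<in>S. z i) = 0"
    and xH: "\<And>i. i \<in> S \<Longrightarrow> xH i = xb - \<gamma> *\<^sub>R (\<Sum>h<H. gg i h + (z i + y))"
  shows "(1 / real (card S)) *\<^sub>R (\<Sum>i\<in>S. xH i) - xb = - \<gamma> *\<^sub>R ((1 / real (card S)) *\<^sub>R (\<Sum>h<H. \<Sum>i\<in>S. gg i h - GFx i h)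
      + (\<Sum>h<H. (1 / real (card S)) *\<^sub>R (\<Sum>i\<in>S. GFx i h) + y))"
proof -
  define n where "n = real (card S)"
  have n: "n \<noteq> 0" using S by (simp add: n_def)
  have s1: "\<And>i. (\<Sum>h<H. gg i h + (z i + y)) = (\<Sum>h<H. gg i h) + real H *\<^sub>R z i + real H *\<^sub>R y"
    by (simp add: sum.distrib scaleR_add_right sum_constant_scaleR)
  have "(\<Sum>i\<in>S. xH i) = (\<Sum>i\<in>S. xb - \<gamma> *\<^sub>R ((\<Sum>h<H. gg i h) + real H *\<^sub>R z i + real H *\<^sub>R y))"
    using xH s1 by simp
  also have "\<dots> = n *\<^sub>R xb - \<gamma> *\<^sub>R ((\<Sum>i\<in>S. \<Sum>h<H. gg i h) + real H *\<^sub>R (\<Sum>i\<in>S. z i) + (n * real H) *\<^sub>R y)"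
    by (simp add: sum_subtractf sum.distrib scaleR_sum_right[symmetric] n_def sum_constant_scaleR scaleR_scaleR)
  also have "\<dots> = n *\<^sub>R xb - \<gamma> *\<^sub>R ((\<Sum>h<H. \<Sum>i\<in>S. gg i h) + (n * real H) *\<^sub>R y)"
    using z by (simp add: sum.swap[of _ S])
  finally have sx: "(\<Sum>i\<in>S. xH i) = \<dots>" .
  have r: "(\<Sum>h<H. \<Sum>i\<in>S. gg i h - GFx i h) + (\<Sum>h<H. \<Sum>i\<in>S. GFx i h) = (\<Sum>h<H. \<Sum>i\<in>S. gg i h)"
    by (simp add: sum_subtractf)
  have "- \<gamma> *\<^sub>R ((1 / n) *\<^sub>R (\<Sum>h<H. \<Sum>i\<in>S. gg i h - GFx i h) + (\<Sum>h<H. (1 / n) *\<^sub>R (\<Sum>i\<in>S. GFx i h) + y))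
     = - \<gamma> *\<^sub>R ((1 / n) *\<^sub>R ((\<Sum>h<H. \<Sum>i\<in>S. gg i h - GFx i h) + (\<Sum>h<H. \<Sum>i\<in>S. GFx i h)) + real H *\<^sub>R y)"
    by (simp add: sum.distrib scaleR_sum_right[symmetric] scaleR_add_right sum_constant_scaleR)
  also have "\<dots> = - \<gamma> *\<^sub>R ((1 / n) *\<^sub>R (\<Sum>h<H. \<Sum>i\<in>S. gg i h) + real H *\<^sub>R y)" unfolding r ..
  also have "\<dots> = (1 / n) *\<^sub>R (n *\<^sub>R xb - \<gamma> *\<^sub>R ((\<Sum>h<H. \<Sum>i\<in>S. gg i h) + (n * real H) *\<^sub>R y)) - xb"
    using n by (simp add: scaleR_add_right scaleR_diff_right algebra_simps)
  finally show ?thesis unfolding sx n_def[symmetric] by simp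
qed


context mtgc_setup begin

lemma GXB: "j < N \<Longrightarrow> e \<le> E \<Longrightarrow> G (Bs t e 0) (\<lambda>\<omega>. mtgc_xbarj gF C N E H \<gamma> x0 (sample_path \<xi> \<omega>) j t e)"
  unfolding mtgc_xbarj_def mtgc_xbar_def mtgc_y_def
  using inner_G[of j t "\<lambda>\<omega>. fst (mtgc_outer gF C N E H \<gamma> x0 (sample_path \<xi> \<omega>) t)"
      "\<lambda>\<omega>. snd (mtgc_outer gF C N E H \<gamma> x0 (sample_path \<xi> \<omega>) t) j" e] outer_G[of t x0] by auto

lemma GZ: "j < N \<Longrightarrow> e \<le> E \<Longrightarrow> i \<in> C j \<Longrightarrow> G (Bs t e 1) (\<lambda>\<omega>. mtgc_z gF C N E H \<gamma> x0 (sample_path \<xi> \<omega>) j t e i)"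
  unfolding mtgc_z_def mtgc_xbar_def mtgc_y_def
  using inner_G[of j t "\<lambda>\<omega>. fst (mtgc_outer gF C N E H \<gamma> x0 (sample_path \<xi> \<omega>) t)"
      "\<lambda>\<omega>. snd (mtgc_outer gF C N E H \<gamma> x0 (sample_path \<xi> \<omega>) t) j" e] outer_G[of t x0] by auto

lemma GY: "j < N \<Longrightarrow> G (Bs t 0 1) (\<lambda>\<omega>. mtgc_y gF C N E H \<gamma> x0 (sample_path \<xi> \<omega>) t j)"
  unfolding mtgc_y_def using outer_G[of t x0] by auto

lemma GX: assumes "j < N" "e < E" "i \<in> C j" "h \<le> H"
  shows "G (Bs t e h) (\<lambda>\<omega>. mtgc_x gF C N E H \<gamma> x0 (sample_path \<xi> \<omega>) j t e i h)"
proof -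
  have X0: "G (Bs t e 0) (\<lambda>\<omega>. mtgc_xbarj gF C N E H \<gamma> x0 (sample_path \<xi> \<omega>) j t e)" using GXB assms by auto
  have c: "G (Bs t e 1) (\<lambda>\<omega>. mtgc_z gF C N E H \<gamma> x0 (sample_path \<xi> \<omega>) j t e i + mtgc_y gF C N E H \<gamma> x0 (sample_path \<xi> \<omega>) t j)"
    using GZ[of j e i t x0] GY[of j t x0] assms G_mono[OF _ Bs_e1 Bs_II] by (intro G_add) auto
  show ?thesis unfolding mtgc_x_def by (rule local_G[OF assms(1,3,2) X0 c assms(4)])
qed

lemma GXH: "e \<le> E \<Longrightarrow> G (Bs t e 0) (\<lambda>\<omega>. mtgc_xhat gF C N E H \<gamma> x0 (sample_path \<xi> \<omega>) t e)"
  unfolding mtgc_xhat_def by (intro G_scale G_sum finite_lessThan Bs_II GXB) auto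

end

context mtgc_setup begin

lemma per_je:
  fixes t :: nat and x0 :: 'a
  assumes j: "j < N" and e: "e < E"
  defines "xb \<equiv> \<lambda>\<omega>. mtgc_xbarj gF C N E H \<gamma> x0 (sample_path \<xi> \<omega>) j t e"
    and "xb' \<equiv> \<lambda>\<omega>. mtgc_xbarj gF C N E H \<gamma> x0 (sample_path \<xi> \<omega>) j t (Suc e)"
    and "x \<equiv> \<lambda>i h \<omega>. mtgc_x gF C N E H \<gamma> x0 (sample_path \<xi> \<omega>) j t e i h"
    and "xh \<equiv> \<lambda>\<omega>. mtgc_xhat gF C N E H \<gamma> x0 (sample_path \<xi> \<omega>) t e"
    and "yv \<equiv> \<lambda>\<omega>. mtgc_y gF C N E H \<gamma> x0 (sample_path \<xi> \<omega>) t j"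
    and "n \<equiv> real (card (C j))"
  shows "(\<integral>\<omega>. (norm (xb' \<omega> - xb \<omega>))\<^sup>2 \<partial>M) \<le>
     8 * \<gamma>\<^sup>2 * real H * L\<^sup>2 * ((1 / n) * (\<Sum>i\<in>C j. \<Sum>h<H. \<integral>\<omega>. (norm (xb \<omega> - x i h \<omega>))\<^sup>2 \<partial>M))
   + 8 * \<gamma>\<^sup>2 * (real H)\<^sup>2 * L\<^sup>2 * (\<integral>\<omega>. (norm (xh \<omega> - xb \<omega>))\<^sup>2 \<partial>M)
   + 8 * \<gamma>\<^sup>2 * (real H)\<^sup>2 * (\<integral>\<omega>. (norm (yv \<omega> + grad_fj GF C j (xh \<omega>) - grad_f GF C N (xh \<omega>)))\<^sup>2 \<partial>M)
   + 8 * \<gamma>\<^sup>2 * (real H)\<^sup>2 * (\<integral>\<omega>. (norm (grad_f GF C N (xh \<omega>)))\<^sup>2 \<partial>M)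
   + 2 * \<gamma>\<^sup>2 * real H * (1 / n) * \<sigma>\<^sup>2"
proof -
  have Cf: "finite (C j)" "C j \<noteq> {}" using C_fin[OF j] C_ne[OF j] by auto
  have n0: "n > 0" unfolding n_def using Cf by (simp add: card_gt_0_iff)
  define T where "T \<omega> = (\<Sum>h<H. \<Sum>i\<in>C j. gF i (x i h \<omega>) (\<xi> i t e h \<omega>) - GF i (x i h \<omega>))" for \<omega>
  define gf where "gf \<omega> = grad_f GF C N (xh \<omega>)" for \<omega>
  have delta: "xb' \<omega> - xb \<omega> = - \<gamma> *\<^sub>R ((1 / n) *\<^sub>R T \<omega> + (\<Sum>h<H. (1 / n) *\<^sub>R (\<Sum>i\<in>C j. GF i (x i h \<omega>)) + yv \<omega>))" for \<omega>
  proof -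
    have xb'e: "xb' \<omega> = (1 / n) *\<^sub>R (\<Sum>i\<in>C j. x i H \<omega>)"
      unfolding xb'_def x_def n_def mtgc_x_def mtgc_xbarj_def mtgc_z_def by (simp only: inner_Suc_fst)
    have xH: "x i H \<omega> = xb \<omega> - \<gamma> *\<^sub>R (\<Sum>h<H. gF i (x i h \<omega>) (\<xi> i t e h \<omega>) + (mtgc_z gF C N E H \<gamma> x0 (sample_path \<xi> \<omega>) j t e i + yv \<omega>))" for i
      unfolding x_def xb_def yv_def mtgc_x_def by (subst local_tel) (simp add: sample_path_def)
    have zs: "(\<Sum>i\<in>C j. mtgc_z gF C N E H \<gamma> x0 (sample_path \<xi> \<omega>) j t e i) = 0"
      unfolding mtgc_z_def by (rule z_sum_zero[of C j, OF Cf])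
    show ?thesis
      unfolding xb'e T_def n_def
      by (rule delta_formula[OF Cf zs xH])
  qed
  have Lip: "\<And>i u v. i \<in> C j \<Longrightarrow> norm (GF i u - GF i v) \<le> L * norm (u - v)" using A1[OF j] by blast
  have gfj: "(1 / n) *\<^sub>R (\<Sum>i\<in>C j. GF i (xh \<omega>)) = grad_fj GF C j (xh \<omega>)" for \<omega>
    unfolding grad_fj_def n_def ..
  define R where "R \<omega> = 2 * \<gamma>\<^sup>2 / n\<^sup>2 * (norm (T \<omega>))\<^sup>2
     + 8 * \<gamma>\<^sup>2 * real H * (\<Sum>h<H. L\<^sup>2 * ((1 / n) * (\<Sum>i\<in>C j. (norm (xb \<omega> - x i h \<omega>))\<^sup>2)))
     + 8 * \<gamma>\<^sup>2 * (real H)\<^sup>2 * (L\<^sup>2 * (norm (xh \<omega> - xb \<omega>))\<^sup>2 + (norm (yv \<omega> + grad_fj GF C j (xh \<omega>) - gf \<omega>))\<^sup>2 + (norm (gf \<omega>))\<^sup>2)" for \<omega>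
  have pw: "(norm (xb' \<omega> - xb \<omega>))\<^sup>2 \<le> R \<omega>" for \<omega>
    using pointwise_bound[where g="\<lambda>i h. gF i (x i h \<omega>) (\<xi> i t e h \<omega>)" and x="\<lambda>i h. x i h \<omega>"
        and GF=GF and L=L and \<gamma>=\<gamma>
        and H=H and y="yv \<omega>" and xb="xb \<omega>" and xh="xh \<omega>" and gf="gf \<omega>", OF Cf Lip gamma]
    unfolding delta T_def n_def R_def gfj[unfolded n_def] by simp
  let ?K = "Bs t (Suc e) 0"
  have KII: "?K \<subseteq> II" by (rule Bs_II)
  have Gxb: "G ?K xb" unfolding xb_def using G_mono[OF GXB[of j e t x0] Bs_Suc_e KII] j e by simp
  have Gxb': "G ?K xb'" unfolding xb'_def using GXB[of j "Suc e" t x0] j e by simp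
  have Gx: "\<And>i h. i \<in> C j \<Longrightarrow> h \<le> H \<Longrightarrow> G ?K (x i h)"
    unfolding x_def using G_mono[OF GX[OF j e] Bs_Suc_e KII] by blast
  have Gxh: "G ?K xh" unfolding xh_def using G_mono[OF GXH[of e t x0] Bs_Suc_e KII] e by simp
  have Gyv: "G ?K yv" unfolding yv_def using G_mono[OF GY[OF j, of t x0] _ KII] Bs_e1[of t e] Bs_Suc_e[of t e 1] by blast
  have Ggfj: "G ?K (\<lambda>\<omega>. grad_fj GF C j' (xh \<omega>))" if "j' < N" for j'
    unfolding grad_fj_def using that by (intro G_scale G_sum C_fin KII G_GF[OF that _ Gxh]) auto
  have Ggf: "G ?K gf"
    unfolding gf_def grad_f_def by (intro G_scale G_sum finite_lessThan KII Ggfj) auto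
  have iL: "integrable M (\<lambda>\<omega>. (norm (xb' \<omega> - xb \<omega>))\<^sup>2)" using G_int[OF G_diff[OF Gxb' Gxb]] .
  have iQ: "\<And>i h. i \<in> C j \<Longrightarrow> h < H \<Longrightarrow> integrable M (\<lambda>\<omega>. (norm (xb \<omega> - x i h \<omega>))\<^sup>2)"
    using G_int[OF G_diff[OF Gxb Gx]] by auto
  have iD: "integrable M (\<lambda>\<omega>. (norm (xh \<omega> - xb \<omega>))\<^sup>2)" using G_int[OF G_diff[OF Gxh Gxb]] .
  have iY: "integrable M (\<lambda>\<omega>. (norm (yv \<omega> + grad_fj GF C j (xh \<omega>) - gf \<omega>))\<^sup>2)"
    using G_int[OF G_diff[OF G_add[OF Gyv Ggfj[OF j]] Ggf]] .
  have iG: "integrable M (\<lambda>\<omega>. (norm (gf \<omega>))\<^sup>2)" using G_int[OF Ggf] .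
  have Xm: "\<And>i h. i \<in> C j \<Longrightarrow> h < H \<Longrightarrow> x i h \<in> borel_measurable (NK (Bs t e h))"
    unfolding x_def using GX[OF j e] unfolding G_def by auto
  have nt: "T \<in> borel_measurable (NK (Bs t e H)) \<and> (\<integral>\<^sup>+\<omega>. ennreal ((norm (T \<omega>))\<^sup>2) \<partial>M) \<le> ennreal (real H * n * \<sigma>\<^sup>2)"
    unfolding T_def n_def by (rule noise_total[OF j e Xm]) auto
  have TM[measurable]: "T \<in> borel_measurable M" using meas_NK_M[OF conjunct1[OF nt] Bs_II] .
  have iT: "integrable M (\<lambda>\<omega>. (norm (T \<omega>))\<^sup>2)"
    using nt by (intro integrableI_nonneg) (auto simp: le_less_trans[OF _ ennreal_less_top])
  have TB: "(\<integral>\<omega>. (norm (T \<omega>))\<^sup>2 \<partial>M) \<le> real H * n * \<sigma>\<^sup>2"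
  proof -
    have "ennreal (\<integral>\<omega>. (norm (T \<omega>))\<^sup>2 \<partial>M) = (\<integral>\<^sup>+\<omega>. ennreal ((norm (T \<omega>))\<^sup>2) \<partial>M)"
      by (rule nn_integral_eq_integral[OF iT, symmetric]) auto
    also have "\<dots> \<le> ennreal (real H * n * \<sigma>\<^sup>2)" using nt by simp
    finally show ?thesis using n0 by (simp add: ennreal_le_iff)
  qed
  have iR: "integrable M R" unfolding R_def
    using iT iQ iD iY iG
    by (intro Bochner_Integration.integrable_add integrable_mult_right Bochner_Integration.integrable_sum) auto
  have "(\<integral>\<omega>. (norm (xb' \<omega> - xb \<omega>))\<^sup>2 \<partial>M) \<le> (\<integral>\<omega>. R \<omega> \<partial>M)"
    by (rule integral_mono[OF iL iR pw])
  also have "(\<integral>\<omega>. R \<omega> \<partial>M) = 2 * \<gamma>\<^sup>2 / n\<^sup>2 * (\<integral>\<omega>. (norm (T \<omega>))\<^sup>2 \<partial>M)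
     + 8 * \<gamma>\<^sup>2 * real H * (\<Sum>h<H. L\<^sup>2 * ((1 / n) * (\<Sum>i\<in>C j. \<integral>\<omega>. (norm (xb \<omega> - x i h \<omega>))\<^sup>2 \<partial>M)))
     + 8 * \<gamma>\<^sup>2 * (real H)\<^sup>2 * (L\<^sup>2 * (\<integral>\<omega>. (norm (xh \<omega> - xb \<omega>))\<^sup>2 \<partial>M)
        + (\<integral>\<omega>. (norm (yv \<omega> + grad_fj GF C j (xh \<omega>) - gf \<omega>))\<^sup>2 \<partial>M) + (\<integral>\<omega>. (norm (gf \<omega>))\<^sup>2 \<partial>M))"
  proof -
    let ?S1 = "\<lambda>\<omega>. \<Sum>h<H. L\<^sup>2 * ((1 / n) * (\<Sum>i\<in>C j. (norm (xb \<omega> - x i h \<omega>))\<^sup>2))"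
    let ?S2 = "\<lambda>\<omega>. L\<^sup>2 * (norm (xh \<omega> - xb \<omega>))\<^sup>2 + (norm (yv \<omega> + grad_fj GF C j (xh \<omega>) - gf \<omega>))\<^sup>2 + (norm (gf \<omega>))\<^sup>2"
    have iS1: "integrable M ?S1" using iQ by (intro Bochner_Integration.integrable_sum integrable_mult_right) auto
    have iS2: "integrable M ?S2" using iD iY iG by (intro Bochner_Integration.integrable_add integrable_mult_right) auto
    have I1: "(\<integral>\<omega>. ?S1 \<omega> \<partial>M) = (\<Sum>h<H. L\<^sup>2 * ((1 / n) * (\<Sum>i\<in>C j. \<integral>\<omega>. (norm (xb \<omega> - x i h \<omega>))\<^sup>2 \<partial>M)))"
    proof -
      have "(\<integral>\<omega>. ?S1 \<omega> \<partial>M) = (\<Sum>h<H. \<integral>\<omega>. L\<^sup>2 * ((1 / n) * (\<Sum>i\<in>C j. (norm (xb \<omega> - x i h \<omega>))\<^sup>2)) \<partial>M)"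
        using iQ by (intro Bochner_Integration.integral_sum integrable_mult_right Bochner_Integration.integrable_sum) auto
      also have "\<dots> = (\<Sum>h<H. L\<^sup>2 * ((1 / n) * (\<Sum>i\<in>C j. \<integral>\<omega>. (norm (xb \<omega> - x i h \<omega>))\<^sup>2 \<partial>M)))"
      proof (intro sum.cong refl)
        fix h assume "h \<in> {..<H}"
        then show "(\<integral>\<omega>. L\<^sup>2 * ((1 / n) * (\<Sum>i\<in>C j. (norm (xb \<omega> - x i h \<omega>))\<^sup>2)) \<partial>M)
            = L\<^sup>2 * ((1 / n) * (\<Sum>i\<in>C j. \<integral>\<omega>. (norm (xb \<omega> - x i h \<omega>))\<^sup>2 \<partial>M))"
          using iQ by (simp add: Bochner_Integration.integral_sum)
      qed
      finally show ?thesis .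
    qed
    have I2: "(\<integral>\<omega>. ?S2 \<omega> \<partial>M) = L\<^sup>2 * (\<integral>\<omega>. (norm (xh \<omega> - xb \<omega>))\<^sup>2 \<partial>M)
        + (\<integral>\<omega>. (norm (yv \<omega> + grad_fj GF C j (xh \<omega>) - gf \<omega>))\<^sup>2 \<partial>M) + (\<integral>\<omega>. (norm (gf \<omega>))\<^sup>2 \<partial>M)"
      using iD iY iG by (simp add: Bochner_Integration.integral_add)
    have "(\<integral>\<omega>. R \<omega> \<partial>M) = (\<integral>\<omega>. 2 * \<gamma>\<^sup>2 / n\<^sup>2 * (norm (T \<omega>))\<^sup>2 + 8 * \<gamma>\<^sup>2 * real H * ?S1 \<omega> \<partial>M)
        + (\<integral>\<omega>. 8 * \<gamma>\<^sup>2 * (real H)\<^sup>2 * ?S2 \<omega> \<partial>M)"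
      unfolding R_def
      by (rule Bochner_Integration.integral_add[OF Bochner_Integration.integrable_add[OF integrable_mult_right[OF iT] integrable_mult_right[OF iS1]] integrable_mult_right[OF iS2]])
    also have "(\<integral>\<omega>. 2 * \<gamma>\<^sup>2 / n\<^sup>2 * (norm (T \<omega>))\<^sup>2 + 8 * \<gamma>\<^sup>2 * real H * ?S1 \<omega> \<partial>M)
        = (\<integral>\<omega>. 2 * \<gamma>\<^sup>2 / n\<^sup>2 * (norm (T \<omega>))\<^sup>2 \<partial>M) + (\<integral>\<omega>. 8 * \<gamma>\<^sup>2 * real H * ?S1 \<omega> \<partial>M)"
      by (rule Bochner_Integration.integral_add[OF integrable_mult_right[OF iT] integrable_mult_right[OF iS1]])
    finally show ?thesis by (simp only: integral_mult_right_zero I1 I2)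
  qed
  also have "\<dots> \<le> 2 * \<gamma>\<^sup>2 / n\<^sup>2 * (real H * n * \<sigma>\<^sup>2)
     + 8 * \<gamma>\<^sup>2 * real H * (\<Sum>h<H. L\<^sup>2 * ((1 / n) * (\<Sum>i\<in>C j. \<integral>\<omega>. (norm (xb \<omega> - x i h \<omega>))\<^sup>2 \<partial>M)))
     + 8 * \<gamma>\<^sup>2 * (real H)\<^sup>2 * (L\<^sup>2 * (\<integral>\<omega>. (norm (xh \<omega> - xb \<omega>))\<^sup>2 \<partial>M)
        + (\<integral>\<omega>. (norm (yv \<omega> + grad_fj GF C j (xh \<omega>) - gf \<omega>))\<^sup>2 \<partial>M) + (\<integral>\<omega>. (norm (gf \<omega>))\<^sup>2 \<partial>M))"
    using TB n0 by (intro add_right_mono mult_left_mono) auto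
  also have "\<dots> = 8 * \<gamma>\<^sup>2 * real H * L\<^sup>2 * ((1 / n) * (\<Sum>i\<in>C j. \<Sum>h<H. \<integral>\<omega>. (norm (xb \<omega> - x i h \<omega>))\<^sup>2 \<partial>M))
   + 8 * \<gamma>\<^sup>2 * (real H)\<^sup>2 * L\<^sup>2 * (\<integral>\<omega>. (norm (xh \<omega> - xb \<omega>))\<^sup>2 \<partial>M)
   + 8 * \<gamma>\<^sup>2 * (real H)\<^sup>2 * (\<integral>\<omega>. (norm (yv \<omega> + grad_fj GF C j (xh \<omega>) - grad_f GF C N (xh \<omega>)))\<^sup>2 \<partial>M)
   + 8 * \<gamma>\<^sup>2 * (real H)\<^sup>2 * (\<integral>\<omega>. (norm (grad_f GF C N (xh \<omega>)))\<^sup>2 \<partial>M)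
   + 2 * \<gamma>\<^sup>2 * real H * (1 / n) * \<sigma>\<^sup>2"
  proof -
    have sw: "(\<Sum>h<H. L\<^sup>2 * ((1 / n) * (\<Sum>i\<in>C j. \<integral>\<omega>. (norm (xb \<omega> - x i h \<omega>))\<^sup>2 \<partial>M)))
       = L\<^sup>2 * ((1 / n) * (\<Sum>i\<in>C j. \<Sum>h<H. \<integral>\<omega>. (norm (xb \<omega> - x i h \<omega>))\<^sup>2 \<partial>M))"
    proof -
      have "(\<Sum>h<H. L\<^sup>2 * ((1 / n) * (\<Sum>i\<in>C j. \<integral>\<omega>. (norm (xb \<omega> - x i h \<omega>))\<^sup>2 \<partial>M)))
          = L\<^sup>2 * ((1 / n) * (\<Sum>h<H. \<Sum>i\<in>C j. \<integral>\<omega>. (norm (xb \<omega> - x i h \<omega>))\<^sup>2 \<partial>M))"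
        by (simp only: sum_distrib_left)
      also have "(\<Sum>h<H. \<Sum>i\<in>C j. \<integral>\<omega>. (norm (xb \<omega> - x i h \<omega>))\<^sup>2 \<partial>M) = (\<Sum>i\<in>C j. \<Sum>h<H. \<integral>\<omega>. (norm (xb \<omega> - x i h \<omega>))\<^sup>2 \<partial>M)"
        by (rule sum.swap)
      finally show ?thesis .
    qed
    have nn: "2 * \<gamma>\<^sup>2 / n\<^sup>2 * (real H * n * \<sigma>\<^sup>2) = 2 * \<gamma>\<^sup>2 * real H * (1 / n) * \<sigma>\<^sup>2"
      using n0 by (simp add: power2_eq_square field_simps)
    show ?thesis unfolding sw nn gf_def by (simp add: algebra_simps)
  qed
  finally show ?thesis .
qed

end


lemma rearr:
  fixes Q Dd Y :: "nat \<Rightarrow> nat \<Rightarrow> real" and G :: "nat \<Rightarrow> real" and nn :: "nat \<Rightarrow> real" and H N E :: nat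
  assumes N: "N \<ge> 1" and H: "H \<ge> 1"
  shows "(\<Sum>e<E. (1 / real N) * (\<Sum>j<N.
       8 * \<gamma>\<^sup>2 * real H * L\<^sup>2 * ((1 / nn j) * Q e j)
     + 8 * \<gamma>\<^sup>2 * (real H)\<^sup>2 * L\<^sup>2 * Dd e j
     + 8 * \<gamma>\<^sup>2 * (real H)\<^sup>2 * Y e j
     + 8 * \<gamma>\<^sup>2 * (real H)\<^sup>2 * G e
     + 2 * \<gamma>\<^sup>2 * real H * (1 / nn j) * \<sigma>\<^sup>2))
   = 8 * \<gamma>\<^sup>2 * (real H)\<^sup>2 * L\<^sup>2 * (\<Sum>e<E. (1 / (real N * real H)) * (\<Sum>j<N. (1 / nn j) * Q e j))
     + 8 * \<gamma>\<^sup>2 * (real H)\<^sup>2 * L\<^sup>2 * (\<Sum>e<E. (1 / real N) * (\<Sum>j<N. Dd e j))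
     + 8 * \<gamma>\<^sup>2 * (real H)\<^sup>2 * (\<Sum>e<E. (1 / real N) * (\<Sum>j<N. Y e j))
     + 8 * \<gamma>\<^sup>2 * (real H)\<^sup>2 * (\<Sum>e<E. G e)
     + 2 * \<gamma>\<^sup>2 * real E * real H * ((1 / real N) * (\<Sum>j<N. 1 / nn j)) * \<sigma>\<^sup>2"
proof -
  have N0: "real N \<noteq> 0" and H0: "real H \<noteq> 0" using N H by auto
  have s: "(\<Sum>e<E. (1 / real N) * (\<Sum>j<N.
       8 * \<gamma>\<^sup>2 * real H * L\<^sup>2 * ((1 / nn j) * Q e j)
     + 8 * \<gamma>\<^sup>2 * (real H)\<^sup>2 * L\<^sup>2 * Dd e j
     + 8 * \<gamma>\<^sup>2 * (real H)\<^sup>2 * Y e j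
     + 8 * \<gamma>\<^sup>2 * (real H)\<^sup>2 * G e
     + 2 * \<gamma>\<^sup>2 * real H * (1 / nn j) * \<sigma>\<^sup>2))
    = (\<Sum>e<E. (1 / real N) * (\<Sum>j<N. 8 * \<gamma>\<^sup>2 * real H * L\<^sup>2 * ((1 / nn j) * Q e j)))
    + (\<Sum>e<E. (1 / real N) * (\<Sum>j<N. 8 * \<gamma>\<^sup>2 * (real H)\<^sup>2 * L\<^sup>2 * Dd e j))
    + (\<Sum>e<E. (1 / real N) * (\<Sum>j<N. 8 * \<gamma>\<^sup>2 * (real H)\<^sup>2 * Y e j))
    + (\<Sum>e<E. (1 / real N) * (\<Sum>j<N. 8 * \<gamma>\<^sup>2 * (real H)\<^sup>2 * G e))
    + (\<Sum>e<E. (1 / real N) * (\<Sum>j<N. 2 * \<gamma>\<^sup>2 * real H * (1 / nn j) * \<sigma>\<^sup>2))"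
    by (simp only: sum.distrib distrib_left)
  have s1: "(\<Sum>e<E. (1 / real N) * (\<Sum>j<N. 8 * \<gamma>\<^sup>2 * real H * L\<^sup>2 * ((1 / nn j) * Q e j)))
     = 8 * \<gamma>\<^sup>2 * (real H)\<^sup>2 * L\<^sup>2 * (\<Sum>e<E. (1 / (real N * real H)) * (\<Sum>j<N. (1 / nn j) * Q e j))"
    unfolding sum_distrib_left by (intro sum.cong refl) (simp add: power2_eq_square H0)
  have s2: "(\<Sum>e<E. (1 / real N) * (\<Sum>j<N. 8 * \<gamma>\<^sup>2 * (real H)\<^sup>2 * L\<^sup>2 * Dd e j))
     = 8 * \<gamma>\<^sup>2 * (real H)\<^sup>2 * L\<^sup>2 * (\<Sum>e<E. (1 / real N) * (\<Sum>j<N. Dd e j))"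
    unfolding sum_distrib_left by (intro sum.cong refl) simp
  have s3: "(\<Sum>e<E. (1 / real N) * (\<Sum>j<N. 8 * \<gamma>\<^sup>2 * (real H)\<^sup>2 * Y e j))
     = 8 * \<gamma>\<^sup>2 * (real H)\<^sup>2 * (\<Sum>e<E. (1 / real N) * (\<Sum>j<N. Y e j))"
    unfolding sum_distrib_left by (intro sum.cong refl) simp
  have s4: "(\<Sum>e<E. (1 / real N) * (\<Sum>j<N. 8 * \<gamma>\<^sup>2 * (real H)\<^sup>2 * G e))
     = 8 * \<gamma>\<^sup>2 * (real H)\<^sup>2 * (\<Sum>e<E. G e)"
    unfolding sum_distrib_left using N0 by (intro sum.cong refl) simp
  have s5: "(\<Sum>e<E. (1 / real N) * (\<Sum>j<N. 2 * \<gamma>\<^sup>2 * real H * (1 / nn j) * \<sigma>\<^sup>2))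
     = 2 * \<gamma>\<^sup>2 * real E * real H * ((1 / real N) * (\<Sum>j<N. 1 / nn j)) * \<sigma>\<^sup>2"
  proof -
    have "(\<Sum>j<N. 2 * \<gamma>\<^sup>2 * real H * (1 / nn j) * \<sigma>\<^sup>2) = 2 * \<gamma>\<^sup>2 * real H * (\<Sum>j<N. 1 / nn j) * \<sigma>\<^sup>2"
      by (simp add: sum_distrib_left sum_distrib_right)
    then show ?thesis by simp
  qed
  show ?thesis unfolding s s1 s2 s3 s4 s5 ..
qed


context mtgc_setup begin

lemma main_locale:
  fixes t :: nat and x0 :: 'a
  shows "(\<Sum>e<E. (1 / real N) * (\<Sum>j<N.
        \<integral>\<omega>. (norm (mtgc_xbarj gF C N E H \<gamma> x0 (sample_path \<xi> \<omega>) j t (Suc e) - mtgc_xbarj gF C N E H \<gamma> x0 (sample_path \<xi> \<omega>) j t e))\<^sup>2 \<partial>M))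
    \<le> 8 * \<gamma>\<^sup>2 * (real H)\<^sup>2 * L\<^sup>2 *
         (\<Sum>e<E. (1 / (real N * real H)) * (\<Sum>j<N. (1 / real (card (C j))) *
           (\<Sum>i\<in>C j. \<Sum>h<H. \<integral>\<omega>. (norm (mtgc_xbarj gF C N E H \<gamma> x0 (sample_path \<xi> \<omega>) j t e - mtgc_x gF C N E H \<gamma> x0 (sample_path \<xi> \<omega>) j t e i h))\<^sup>2 \<partial>M)))
       + 8 * \<gamma>\<^sup>2 * (real H)\<^sup>2 * L\<^sup>2 *
         (\<Sum>e<E. (1 / real N) * (\<Sum>j<N. \<integral>\<omega>. (norm (mtgc_xhat gF C N E H \<gamma> x0 (sample_path \<xi> \<omega>) t e - mtgc_xbarj gF C N E H \<gamma> x0 (sample_path \<xi> \<omega>) j t e))\<^sup>2 \<partial>M))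
       + 8 * \<gamma>\<^sup>2 * (real H)\<^sup>2 * (\<Sum>e<E. (1 / real N) * (\<Sum>j<N.
           \<integral>\<omega>. (norm (mtgc_y gF C N E H \<gamma> x0 (sample_path \<xi> \<omega>) t j + grad_fj GF C j (mtgc_xhat gF C N E H \<gamma> x0 (sample_path \<xi> \<omega>) t e) - grad_f GF C N (mtgc_xhat gF C N E H \<gamma> x0 (sample_path \<xi> \<omega>) t e)))\<^sup>2 \<partial>M))
       + 8 * \<gamma>\<^sup>2 * (real H)\<^sup>2 * (\<Sum>e<E. \<integral>\<omega>. (norm (grad_f GF C N (mtgc_xhat gF C N E H \<gamma> x0 (sample_path \<xi> \<omega>) t e)))\<^sup>2 \<partial>M)
       + 2 * \<gamma>\<^sup>2 * real E * real H * ((1 / real N) * (\<Sum>j<N. 1 / real (card (C j)))) * \<sigma>\<^sup>2"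
proof -
  let ?Q = "\<lambda>e j. (\<Sum>i\<in>C j. \<Sum>h<H. \<integral>\<omega>. (norm (mtgc_xbarj gF C N E H \<gamma> x0 (sample_path \<xi> \<omega>) j t e - mtgc_x gF C N E H \<gamma> x0 (sample_path \<xi> \<omega>) j t e i h))\<^sup>2 \<partial>M)"
  let ?Dd = "\<lambda>e j. \<integral>\<omega>. (norm (mtgc_xhat gF C N E H \<gamma> x0 (sample_path \<xi> \<omega>) t e - mtgc_xbarj gF C N E H \<gamma> x0 (sample_path \<xi> \<omega>) j t e))\<^sup>2 \<partial>M"
  let ?Y = "\<lambda>e j. \<integral>\<omega>. (norm (mtgc_y gF C N E H \<gamma> x0 (sample_path \<xi> \<omega>) t j + grad_fj GF C j (mtgc_xhat gF C N E H \<gamma> x0 (sample_path \<xi> \<omega>) t e) - grad_f GF C N (mtgc_xhat gF C N E H \<gamma> x0 (sample_path \<xi> \<omega>) t e)))\<^sup>2 \<partial>M"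
  let ?G = "\<lambda>e. \<integral>\<omega>. (norm (grad_f GF C N (mtgc_xhat gF C N E H \<gamma> x0 (sample_path \<xi> \<omega>) t e)))\<^sup>2 \<partial>M"
  let ?nn = "\<lambda>j. real (card (C j))"
  have "(\<Sum>e<E. (1 / real N) * (\<Sum>j<N.
        \<integral>\<omega>. (norm (mtgc_xbarj gF C N E H \<gamma> x0 (sample_path \<xi> \<omega>) j t (Suc e) - mtgc_xbarj gF C N E H \<gamma> x0 (sample_path \<xi> \<omega>) j t e))\<^sup>2 \<partial>M))
     \<le> (\<Sum>e<E. (1 / real N) * (\<Sum>j<N.
       8 * \<gamma>\<^sup>2 * real H * L\<^sup>2 * ((1 / ?nn j) * ?Q e j)
     + 8 * \<gamma>\<^sup>2 * (real H)\<^sup>2 * L\<^sup>2 * ?Dd e j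
     + 8 * \<gamma>\<^sup>2 * (real H)\<^sup>2 * ?Y e j
     + 8 * \<gamma>\<^sup>2 * (real H)\<^sup>2 * ?G e
     + 2 * \<gamma>\<^sup>2 * real H * (1 / ?nn j) * \<sigma>\<^sup>2))"
    by (intro sum_mono mult_left_mono per_je) auto
  also have "\<dots> = 8 * \<gamma>\<^sup>2 * (real H)\<^sup>2 * L\<^sup>2 * (\<Sum>e<E. (1 / (real N * real H)) * (\<Sum>j<N. (1 / ?nn j) * ?Q e j))
     + 8 * \<gamma>\<^sup>2 * (real H)\<^sup>2 * L\<^sup>2 * (\<Sum>e<E. (1 / real N) * (\<Sum>j<N. ?Dd e j))
     + 8 * \<gamma>\<^sup>2 * (real H)\<^sup>2 * (\<Sum>e<E. (1 / real N) * (\<Sum>j<N. ?Y e j))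
     + 8 * \<gamma>\<^sup>2 * (real H)\<^sup>2 * (\<Sum>e<E. ?G e)
     + 2 * \<gamma>\<^sup>2 * real E * real H * ((1 / real N) * (\<Sum>j<N. 1 / ?nn j)) * \<sigma>\<^sup>2"
    by (rule rearr[OF N H])
  finally show ?thesis .
qed

end

theorem lemmaC2p6:
  fixes M :: "'m measure"
    and D :: "nat \<Rightarrow> 's measure"
    and F :: "nat \<Rightarrow> 'a::euclidean_space \<Rightarrow> 's \<Rightarrow> real"
    and gF :: "nat \<Rightarrow> 'a \<Rightarrow> 's \<Rightarrow> 'a"
    and GF :: "nat \<Rightarrow> 'a \<Rightarrow> 'a"
    and C :: "nat \<Rightarrow> nat set"
    and N E H :: nat
    and \<gamma> L \<sigma> :: real
    and x0 :: 'a
    and \<xi> :: "nat \<Rightarrow> nat \<Rightarrow> nat \<Rightarrow> nat \<Rightarrow> 'm \<Rightarrow> 's"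
    and t :: nat
  assumes M: "prob_space M"
    and N: "N \<ge> 1" and E: "E \<ge> 1" and H: "H \<ge> 1" and gamma: "\<gamma> > 0"
    and C_fin: "\<And>j. j < N \<Longrightarrow> finite (C j)"
    and C_ne: "\<And>j. j < N \<Longrightarrow> C j \<noteq> {}"
    and C_disj: "\<And>j j'. j < N \<Longrightarrow> j' < N \<Longrightarrow> j \<noteq> j' \<Longrightarrow> C j \<inter> C j' = {}"
    and D_prob: "\<And>j i. j < N \<Longrightarrow> i \<in> C j \<Longrightarrow> prob_space (D i)"
    and F_int: "\<And>j i x. j < N \<Longrightarrow> i \<in> C j \<Longrightarrow> integrable (D i) (F i x)"
    and gF_grad: "\<And>j i x s. j < N \<Longrightarrow> i \<in> C j \<Longrightarrow> s \<in> space (D i) \<Longrightarrow>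
        ((\<lambda>y. F i y s) has_derivative (\<lambda>v. gF i x s \<bullet> v)) (at x)"
    and GF_grad: "\<And>j i x. j < N \<Longrightarrow> i \<in> C j \<Longrightarrow>
        ((\<lambda>y. \<integral>s. F i y s \<partial>D i) has_derivative (\<lambda>v. GF i x \<bullet> v)) (at x)"
    and gF_meas: "\<And>j i. j < N \<Longrightarrow> i \<in> C j \<Longrightarrow>
        (\<lambda>p. gF i (fst p) (snd p)) \<in> borel_measurable (borel \<Otimes>\<^sub>M D i)"
    and A1: "\<And>j i x y. j < N \<Longrightarrow> i \<in> C j \<Longrightarrow> norm (GF i x - GF i y) \<le> L * norm (x - y)"
    and A2_int: "\<And>j i x. j < N \<Longrightarrow> i \<in> C j \<Longrightarrow> integrable (D i) (gF i x)"
    and A2_unbiased: "\<And>j i x. j < N \<Longrightarrow> i \<in> C j \<Longrightarrow> (\<integral>s. gF i x s \<partial>D i) = GF i x"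
    and A2_var_int: "\<And>j i x. j < N \<Longrightarrow> i \<in> C j \<Longrightarrow>
        integrable (D i) (\<lambda>s. (norm (gF i x s - GF i x))\<^sup>2)"
    and A2_var: "\<And>j i x. j < N \<Longrightarrow> i \<in> C j \<Longrightarrow>
        (\<integral>s. (norm (gF i x s - GF i x))\<^sup>2 \<partial>D i) \<le> \<sigma>\<^sup>2"
    and samples_distr: "\<And>j i t' e h. j < N \<Longrightarrow> i \<in> C j \<Longrightarrow> e < E \<Longrightarrow> h < H \<Longrightarrow>
        distr M (D i) (\<xi> i t' e h) = D i"
    and samples_indep: "prob_space.indep_vars M (\<lambda>(i, t', e, h). D i) (\<lambda>(i, t', e, h). \<xi> i t' e h)
        {(i, t', e, h). (\<exists>j<N. i \<in> C j) \<and> e < E \<and> h < H}"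
  shows "(\<Sum>e<E. (1 / real N) * (\<Sum>j<N.
        \<integral>\<omega>. (norm (mtgc_xbarj gF C N E H \<gamma> x0 (sample_path \<xi> \<omega>) j t (Suc e) - mtgc_xbarj gF C N E H \<gamma> x0 (sample_path \<xi> \<omega>) j t e))\<^sup>2 \<partial>M))
    \<le> 8 * \<gamma>\<^sup>2 * (real H)\<^sup>2 * L\<^sup>2 *
         (\<Sum>e<E. (1 / (real N * real H)) * (\<Sum>j<N. (1 / real (card (C j))) *
           (\<Sum>i\<in>C j. \<Sum>h<H. \<integral>\<omega>. (norm (mtgc_xbarj gF C N E H \<gamma> x0 (sample_path \<xi> \<omega>) j t e - mtgc_x gF C N E H \<gamma> x0 (sample_path \<xi> \<omega>) j t e i h))\<^sup>2 \<partial>M)))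
       + 8 * \<gamma>\<^sup>2 * (real H)\<^sup>2 * L\<^sup>2 *
         (\<Sum>e<E. (1 / real N) * (\<Sum>j<N. \<integral>\<omega>. (norm (mtgc_xhat gF C N E H \<gamma> x0 (sample_path \<xi> \<omega>) t e - mtgc_xbarj gF C N E H \<gamma> x0 (sample_path \<xi> \<omega>) j t e))\<^sup>2 \<partial>M))
       + 8 * \<gamma>\<^sup>2 * (real H)\<^sup>2 * (\<Sum>e<E. (1 / real N) * (\<Sum>j<N.
           \<integral>\<omega>. (norm (mtgc_y gF C N E H \<gamma> x0 (sample_path \<xi> \<omega>) t j + grad_fj GF C j (mtgc_xhat gF C N E H \<gamma> x0 (sample_path \<xi> \<omega>) t e) - grad_f GF C N (mtgc_xhat gF C N E H \<gamma> x0 (sample_path \<xi> \<omega>) t e)))\<^sup>2 \<partial>M))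
       + 8 * \<gamma>\<^sup>2 * (real H)\<^sup>2 * (\<Sum>e<E. \<integral>\<omega>. (norm (grad_f GF C N (mtgc_xhat gF C N E H \<gamma> x0 (sample_path \<xi> \<omega>) t e)))\<^sup>2 \<partial>M)
       + 2 * \<gamma>\<^sup>2 * real E * real H * ((1 / real N) * (\<Sum>j<N. 1 / real (card (C j)))) * \<sigma>\<^sup>2"
proof -
  interpret mtgc_setup M D gF GF C N E H \<gamma> L \<sigma> \<xi>
    by (intro mtgc_setup.intro M mtgc_setup_axioms.intro) (fact assms)+
  show ?thesis by (rule main_locale)
qed

end
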